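(* For any natural number $n \geq 1$, $\{\omega \cdot (n+1), \omega^\star \cdot (n+1)\} \leq_c \{\omega^2 \cdot n, (\omega^2)^\star \cdot n\}$.
   Context: Structures have domains contained in $\omega$. For countable structures $\mathcal{A},\mathcal{B}$, the class $\{\mathcal{A},\mathcal{B}\}$ denotes the class of all structures (with domain $\subseteq\omega$) isomorphic to $\mathcal{A}$ or to $\mathcal{B}$. Linear orders are in the language $\{<\}$; $L^\star$ is the reverse of a linear order $L$; $\omega\cdot (n+1)$, $\omega^2\cdot n$ are ordinal order types. An enumeration operator $\Gamma$ is a c.e. set of pairs $(\alpha,\varphi)$ with $\alpha$ a finite set of basic (atomic or negated atomic) sentences of the input language with constants from $\omega$ and $\varphi$ a basic sentence of the output language with constants from $\omega$; $\Gamma(X)=\{\varphi : (\alpha,\varphi)\in\Gamma,\ \alpha\subseteq X\}$. $\Gamma$ is a computable embedding of $\mathcal{K}_0$ into $\mathcal{K}_1$ ($\mathcal{K}_0\leq_c\mathcal{K}_1$) if for every $\mathcal{A}\in\mathcal{K}_0$, $\Gamma$ applied to the atomic diagram of $\mathcal{A}$ is the atomic diagram of a structure $\Gamma(\mathcal{A})\in\mathcal{K}_1$, and for all $\mathcal{A},\mathcal{B}\in\mathcal{K}_0$, $\mathcal{A}\cong\mathcal{B}$ iff $\Gamma(\mathcal{A})\cong\Gamma(\mathcal{B})$. *)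

theory Defs
  imports Main "HOL-Library.Nat_Bijection"
begin

datatype recf = Zf | Sf | Proj nat | Comp recf "recf list" | Prim recf recf | Mn recf

inductive eval :: "recf \<Rightarrow> nat list \<Rightarrow> nat \<Rightarrow> bool" where
  eval_Z: "eval Zf xs 0"
| eval_S: "eval Sf (x # xs) (Suc x)"
| eval_Proj: "i < length xs \<Longrightarrow> eval (Proj i) xs (xs ! i)"
| eval_Comp: "list_all2 (\<lambda>g y. eval g xs y) gs ys \<Longrightarrow> eval f ys z \<Longrightarrow> eval (Comp f gs) xs z"
| eval_Prim0: "eval f xs z \<Longrightarrow> eval (Prim f g) (0 # xs) z"
| eval_PrimS: "eval (Prim f g) (n # xs) y \<Longrightarrow> eval g (y # n # xs) z
               \<Longrightarrow> eval (Prim f g) (Suc n # xs) z"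
| eval_Mn: "eval f (n # xs) 0 \<Longrightarrow> (\<forall>m<n. \<exists>k. eval f (m # xs) (Suc k))
               \<Longrightarrow> eval (Mn f) xs n"

definition ce :: "nat set \<Rightarrow> bool" where
  "ce A \<longleftrightarrow> (\<exists>f. \<forall>x. x \<in> A \<longleftrightarrow> (\<exists>y. eval f [x] y))"

datatype bsent = Eq nat nat | Lt nat nat | NEq nat nat | NLt nat nat

fun bs_code :: "bsent \<Rightarrow> nat" where
  "bs_code (Eq a b) = 4 * prod_encode (a, b)"
| "bs_code (Lt a b) = 4 * prod_encode (a, b) + 1"
| "bs_code (NEq a b) = 4 * prod_encode (a, b) + 2"
| "bs_code (NLt a b) = 4 * prod_encode (a, b) + 3"

text \<open>A structure in the language {<}: a domain D \<subseteq> omega and an interpretation of <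
  (only its restriction to D matters).\<close>
type_synonym lstr = "nat set \<times> (nat \<Rightarrow> nat \<Rightarrow> bool)"

definition diag :: "lstr \<Rightarrow> bsent set" where
  "diag A = (let D = fst A; R = snd A in
      {Eq a b | a b. a \<in> D \<and> b \<in> D \<and> a = b}
    \<union> {NEq a b | a b. a \<in> D \<and> b \<in> D \<and> a \<noteq> b}
    \<union> {Lt a b | a b. a \<in> D \<and> b \<in> D \<and> R a b}
    \<union> {NLt a b | a b. a \<in> D \<and> b \<in> D \<and> \<not> R a b})"

definition iso :: "lstr \<Rightarrow> lstr \<Rightarrow> bool" where
  "iso A B \<longleftrightarrow> (\<exists>h. bij_betw h (fst A) (fst B) \<and>
      (\<forall>x\<in>fst A. \<forall>y\<in>fst A. snd A x y \<longleftrightarrow> snd B (h x) (h y)))"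

text \<open>The class {A, B}: all structures with domain \<subseteq> omega isomorphic to A or to B.\<close>
definition cls2 :: "lstr \<Rightarrow> lstr \<Rightarrow> lstr set" where
  "cls2 A B = {C. iso C A \<or> iso C B}"

definition enum_op :: "(bsent set \<times> bsent) set \<Rightarrow> bool" where
  "enum_op \<Gamma> \<longleftrightarrow> (\<forall>(\<alpha>, \<phi>)\<in>\<Gamma>. finite \<alpha>) \<and>
     ce {prod_encode (set_encode (bs_code ` \<alpha>), bs_code \<phi>) | \<alpha> \<phi>. (\<alpha>, \<phi>) \<in> \<Gamma>}"

definition apply_op :: "(bsent set \<times> bsent) set \<Rightarrow> bsent set \<Rightarrow> bsent set" where
  "apply_op \<Gamma> X = {\<phi>. \<exists>\<alpha>. (\<alpha>, \<phi>) \<in> \<Gamma> \<and> \<alpha> \<subseteq> X}"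

definition comp_embedding :: "(bsent set \<times> bsent) set \<Rightarrow> lstr set \<Rightarrow> lstr set \<Rightarrow> bool" where
  "comp_embedding \<Gamma> K0 K1 \<longleftrightarrow> enum_op \<Gamma> \<and>
     (\<forall>A\<in>K0. \<exists>B\<in>K1. apply_op \<Gamma> (diag A) = diag B) \<and>
     (\<forall>A\<in>K0. \<forall>B\<in>K0. \<forall>A' B'. apply_op \<Gamma> (diag A) = diag A' \<longrightarrow> apply_op \<Gamma> (diag B) = diag B'
         \<longrightarrow> (iso A B \<longleftrightarrow> iso A' B'))"

definition comp_reducible :: "lstr set \<Rightarrow> lstr set \<Rightarrow> bool" (infix "\<le>\<^sub>c" 50) where
  "K0 \<le>\<^sub>c K1 \<longleftrightarrow> (\<exists>\<Gamma>. comp_embedding \<Gamma> K0 K1)"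

definition omega_lo :: lstr where
  "omega_lo = (UNIV, (<))"

definition omega2_lo :: lstr where
  "omega2_lo = (UNIV, \<lambda>a b. case prod_decode a of (i, x) \<Rightarrow> case prod_decode b of (j, y) \<Rightarrow>
                      i < j \<or> (i = j \<and> x < y))"

definition rev_lo :: "lstr \<Rightarrow> lstr" where
  "rev_lo L = (fst L, \<lambda>x y. snd L y x)"

text \<open>L \<cdot> m: m consecutive copies of L (ordinal product with m).\<close>
definition times_lo :: "lstr \<Rightarrow> nat \<Rightarrow> lstr" where
  "times_lo L m = ({prod_encode (i, x) | i x. i < m \<and> x \<in> fst L},
     \<lambda>a b. case prod_decode a of (i, x) \<Rightarrow> case prod_decode b of (j, y) \<Rightarrow>
        i < j \<or> (i = j \<and> snd L x y))"

end

theory Submission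
  imports Defs
begin


lemma l2_det: "list_all2 (\<lambda>g y. P g y \<and> (\<forall>y'. P g y' \<longrightarrow> y = y')) gs ys \<Longrightarrow> list_all2 P gs ys' \<Longrightarrow> ys = ys'"
proof (induction gs arbitrary: ys ys')
  case Nil then show ?case by simp
next
  case (Cons g gs)
  then obtain y ys0 y2 ys2 where "ys = y # ys0" "ys' = y2 # ys2" by (auto simp: list_all2_Cons1)
  with Cons show ?case by auto
qed

lemma eval_det: "eval f xs y \<Longrightarrow> eval f xs y' \<Longrightarrow> y = y'"
proof (induction arbitrary: y' rule: eval.induct)
  case (eval_Z xs) from eval_Z.prems show ?case by (cases rule: eval.cases) auto
next
  case (eval_S x xs) from eval_S.prems show ?case by (cases rule: eval.cases) auto
next
  case (eval_Proj i xs) from eval_Proj.prems show ?case by (cases rule: eval.cases) auto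
next
  case (eval_Comp xs gs ys f z)
  from eval_Comp.prems obtain ys' where a: "list_all2 (\<lambda>g y. eval g xs y) gs ys'" and b: "eval f ys' y'"
    by (cases rule: eval.cases) auto
  have "ys = ys'" by (rule l2_det[OF eval_Comp.IH(1) a])
  with b eval_Comp.IH(2) show ?case by simp
next
  case (eval_Prim0 f xs z g)
  from eval_Prim0.prems show ?case by (cases rule: eval.cases) (auto simp: eval_Prim0.IH)
next
  case (eval_PrimS f g n xs y z)
  from eval_PrimS.prems show ?case
    by (cases rule: eval.cases) (auto dest: eval_PrimS.IH)
next
  case (eval_Mn f n xs)
  from eval_Mn.prems obtain n' where e: "y' = n'" "eval f (n' # xs) 0" "\<forall>m<n'. \<exists>k. eval f (m # xs) (Suc k)"
    by (cases rule: eval.cases) auto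
  show ?case
  proof (rule ccontr)
    assume "n \<noteq> y'"
    then have "n < n' \<or> n' < n" using e by auto
    then show False
    proof
      assume "n < n'"
      then obtain k where "eval f (n # xs) (Suc k)" using e by auto
      then show False using eval_Mn.IH(1) by fastforce
    next
      assume "n' < n"
      then obtain k where "eval f (n' # xs) (Suc k)" "\<forall>y'. eval f (n' # xs) y' \<longrightarrow> Suc k = y'"
        using eval_Mn.IH(2) by blast
      then show False using e by fastforce
    qed
  qed
qed


definition ADD :: recf where "ADD = Prim (Proj 0) (Comp Sf [Proj 0])"
definition MUL :: recf where "MUL = Prim Zf (Comp ADD [Proj 0, Proj 2])"
definition PRED :: recf where "PRED = Prim Zf (Proj 1)"
definition SUBR :: recf where "SUBR = Prim (Proj 0) (Comp PRED [Proj 0])"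
definition SUB :: recf where "SUB = Comp SUBR [Proj 1, Proj 0]"
fun cnst :: "nat \<Rightarrow> recf" where
  "cnst 0 = Zf" | "cnst (Suc n) = Comp Sf [cnst n]"
definition POW2 :: recf where "POW2 = Prim (cnst 1) (Comp ADD [Proj 0, Proj 0])"

lemma eval_cnst: "eval (cnst n) xs n"
proof (induction n)
  case 0 then show ?case by (simp add: eval_Z)
next
  case (Suc n)
  then show ?case by (auto intro!: eval_Comp[where ys="[n]"] eval_S)
qed

lemma eval_ADD: "eval ADD [a, b] (a + b)"
  unfolding ADD_def
proof (induction a)
  case 0 then show ?case using eval_Prim0[OF eval_Proj[of 0 "[b]"]] by simp
next
  case (Suc a)
  have "eval (Comp Sf [Proj 0]) [a + b, a, b] (Suc (a + b))"
    by (rule eval_Comp[where ys="[a+b]"]) (auto intro: eval_Proj[of 0 "[a+b,a,b]", simplified] eval_S)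
  then show ?case using eval_PrimS[OF Suc] by simp
qed

lemma eval_MUL: "eval MUL [a, b] (a * b)"
  unfolding MUL_def
proof (induction a)
  case 0 then show ?case using eval_Prim0[OF eval_Z] by simp
next
  case (Suc a)
  have "eval (Comp ADD [Proj 0, Proj 2]) [a * b, a, b] (a * b + b)"
    by (rule eval_Comp[where ys="[a*b, b]"]) (auto intro: eval_Proj[of 0 "[a*b,a,b]", simplified] eval_Proj[of 2 "[a*b,a,b]", simplified] eval_ADD)
  then show ?case using eval_PrimS[OF Suc] by (simp add: add.commute)
qed

lemma eval_PRED: "eval PRED [a] (a - 1)"
  unfolding PRED_def
proof (induction a)
  case 0 then show ?case using eval_Prim0[OF eval_Z] by simp
next
  case (Suc a)
  have "eval (Proj 1) [a - 1, a] a" using eval_Proj[of 1 "[a-1,a]"] by simp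
  then show ?case using eval_PrimS[OF Suc] by simp
qed

lemma eval_SUBR: "eval SUBR [b, a] (a - b)"
  unfolding SUBR_def
proof (induction b)
  case 0 then show ?case using eval_Prim0[OF eval_Proj[of 0 "[a]"]] by simp
next
  case (Suc b)
  have "eval (Comp PRED [Proj 0]) [a - b, b, a] (a - b - 1)"
    by (rule eval_Comp[where ys="[a-b]"]) (use eval_PRED[of "a-b"] in \<open>auto intro: eval_Proj[of 0 "[a-b,b,a]", simplified]\<close>)
  then show ?case using eval_PrimS[OF Suc] by simp
qed

lemma eval_SUB: "eval SUB [a, b] (a - b)"
  unfolding SUB_def
  by (rule eval_Comp[where ys="[b,a]"]) (auto intro: eval_Proj[of 1 "[a,b]", simplified] eval_Proj[of 0 "[a,b]", simplified] eval_SUBR)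

lemma eval_POW2: "eval POW2 [a] (2 ^ a)"
  unfolding POW2_def
proof (induction a)
  case 0 then show ?case using eval_Prim0[OF eval_cnst[of 1 "[]"]] by simp
next
  case (Suc a)
  have "eval (Comp ADD [Proj 0, Proj 0]) [2^a, a] (2^a + 2^a)"
    by (rule eval_Comp[where ys="[2^a, 2^a]"]) (auto intro: eval_Proj[of 0 "[2^a,a]", simplified] eval_ADD)
  then show ?case using eval_PrimS[OF Suc] by (simp add: mult_2)
qed

datatype aexp = V nat | C nat | Add aexp aexp | Mul aexp aexp | Sub aexp aexp | Pw aexp | Sum nat aexp aexp

fun sem :: "aexp \<Rightarrow> (nat \<Rightarrow> nat) \<Rightarrow> nat" where
  "sem (V v) r = r v"
| "sem (C n) r = n"
| "sem (Add a b) r = sem a r + sem b r"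
| "sem (Mul a b) r = sem a r * sem b r"
| "sem (Sub a b) r = sem a r - sem b r"
| "sem (Pw a) r = 2 ^ sem a r"
| "sem (Sum v b e) r = (\<Sum>i<sem b r. sem e (r(v := i)))"

fun fv :: "aexp \<Rightarrow> nat set" where
  "fv (V v) = {v}"
| "fv (C n) = {}"
| "fv (Add a b) = fv a \<union> fv b"
| "fv (Mul a b) = fv a \<union> fv b"
| "fv (Sub a b) = fv a \<union> fv b"
| "fv (Pw a) = fv a"
| "fv (Sum v b e) = fv b \<union> (fv e - {v})"

fun idx :: "nat list \<Rightarrow> nat \<Rightarrow> nat" where
  "idx [] v = 0"
| "idx (w # ws) v = (if w = v then 0 else Suc (idx ws v))"

lemma idx_less: "v \<in> set vs \<Longrightarrow> idx vs v < length vs"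
  by (induction vs) auto

fun comp :: "nat list \<Rightarrow> aexp \<Rightarrow> recf" where
  "comp vs (V v) = Proj (idx vs v)"
| "comp vs (C n) = cnst n"
| "comp vs (Add a b) = Comp ADD [comp vs a, comp vs b]"
| "comp vs (Mul a b) = Comp MUL [comp vs a, comp vs b]"
| "comp vs (Sub a b) = Comp SUB [comp vs a, comp vs b]"
| "comp vs (Pw a) = Comp POW2 [comp vs a]"
| "comp vs (Sum v b e) = Comp (Prim Zf (Comp ADD [Proj 0,
      Comp (comp (v # vs) e) (Proj 1 # map (\<lambda>i. Proj (i + 2)) [0..<length vs])]))
      (comp vs b # map Proj [0..<length vs])"

lemma projs_eval:
  assumes "d + k \<le> length ws"
  shows "list_all2 (\<lambda>g z. eval g ws z) (map (\<lambda>i. Proj (i + d)) [0..<k]) (map (\<lambda>i. ws ! (i + d)) [0..<k])"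
  using assms by (auto simp: list_all2_conv_all_nth intro: eval_Proj)

lemma projs_eval0:
  shows "list_all2 (\<lambda>g z. eval g ws z) (map Proj [0..<length ws]) ws"
  using projs_eval[of 0 "length ws" ws] by (simp add: map_nth)

lemma comp_correct:
  "fv e \<subseteq> set vs \<Longrightarrow> length xs = length vs \<Longrightarrow> (\<forall>w\<in>set vs. xs ! idx vs w = r w)
   \<Longrightarrow> eval (comp vs e) xs (sem e r)"
proof (induction e arbitrary: vs xs r)
  case (V v)
  then show ?case using eval_Proj[of "idx vs v" xs] idx_less[of v vs] by auto
next
  case (C n) then show ?case by (simp add: eval_cnst)
next
  case (Add a b)
  then show ?case by (auto intro!: eval_Comp[where ys="[sem a r, sem b r]"] eval_ADD)
next
  case (Mul a b)
  then show ?case by (auto intro!: eval_Comp[where ys="[sem a r, sem b r]"] eval_MUL)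
next
  case (Sub a b)
  then show ?case by (auto intro!: eval_Comp[where ys="[sem a r, sem b r]"] eval_SUB)
next
  case (Pw a)
  then show ?case by (auto intro!: eval_Comp[where ys="[sem a r]"] eval_POW2)
next
  case (Sum v b e)
  let ?k = "length vs"
  let ?B = "comp (v # vs) e"
  let ?G = "Comp ADD [Proj 0, Comp ?B (Proj 1 # map (\<lambda>i. Proj (i + 2)) [0..<?k])]"
  have body: "eval ?B (i # xs) (sem e (r(v := i)))" for i
  proof (rule Sum.IH(2))
    show "fv e \<subseteq> set (v # vs)" using Sum.prems(1) by auto
    show "length (i # xs) = length (v # vs)" using Sum.prems(2) by simp
    show "\<forall>w\<in>set (v # vs). (i # xs) ! idx (v # vs) w = (r(v := i)) w"
      using Sum.prems(3) by auto
  qed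
  have step: "eval ?G (y # i # xs) (y + sem e (r(v := i)))" for y i
  proof (rule eval_Comp[where ys="[y, sem e (r(v := i))]"])
    have "list_all2 (\<lambda>g z. eval g (y # i # xs) z) (Proj 1 # map (\<lambda>i. Proj (i + 2)) [0..<?k]) (i # xs)"
    proof -
      have "list_all2 (\<lambda>g z. eval g (y # i # xs) z) (map (\<lambda>i. Proj (i + 2)) [0..<?k])
             (map (\<lambda>j. (y # i # xs) ! (j + 2)) [0..<?k])"
        by (rule projs_eval) (use Sum.prems(2) in simp)
      moreover have "map (\<lambda>j. (y # i # xs) ! (j + 2)) [0..<?k] = xs"
        using Sum.prems(2) by (auto intro: nth_equalityI)
      ultimately show ?thesis using eval_Proj[of 1 "y # i # xs"] by simp
    qed
    then have "eval (Comp ?B (Proj 1 # map (\<lambda>i. Proj (i + 2)) [0..<?k])) (y # i # xs) (sem e (r(v := i)))"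
      using body by (rule eval_Comp)
    then show "list_all2 (\<lambda>g ya. eval g (y # i # xs) ya) [Proj 0, Comp ?B (Proj 1 # map (\<lambda>i. Proj (i + 2)) [0..<?k])] [y, sem e (r(v := i))]"
      using eval_Proj[of 0 "y # i # xs"] by simp
    show "eval ADD [y, sem e (r(v := i))] (y + sem e (r(v := i)))" by (rule eval_ADD)
  qed
  have prim: "eval (Prim Zf ?G) (m # xs) (\<Sum>i<m. sem e (r(v := i)))" for m
  proof (induction m)
    case 0 then show ?case using eval_Prim0[OF eval_Z] by simp
  next
    case (Suc m)
    have "eval (Prim Zf ?G) (Suc m # xs) ((\<Sum>i<m. sem e (r(v := i))) + sem e (r(v := m)))"
      by (rule eval_PrimS[OF Suc step])
    then show ?case by (simp only: sum.lessThan_Suc)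
  qed
  have bval: "eval (comp vs b) xs (sem b r)" using Sum by auto
  show ?case
    apply simp
    apply (rule eval_Comp[where ys="sem b r # xs"])
    using bval projs_eval0[of xs] Sum.prems(2) prim by auto
qed

lemma sem_cong: "(\<forall>w\<in>fv e. r w = r' w) \<Longrightarrow> sem e r = sem e r'"
proof (induction e arbitrary: r r')
  case (Sum v b e)
  have "sem b r = sem b r'" using Sum by auto
  moreover have "sem e (r(v := i)) = sem e (r'(v := i))" for i using Sum by auto
  ultimately show ?case by simp
qed (auto simp: Un_iff, (metis UnCI)+)

lemma ce_from_aexp:
  assumes "fv E \<subseteq> {0}" and "\<And>x. x \<in> A \<longleftrightarrow> sem E (\<lambda>_. x) = 0"
  shows "ce A"
proof -
  let ?g = "comp [1, 0] E"
  have ev: "eval ?g [m, x] (sem E (\<lambda>_. x))" for m x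
  proof -
    have "eval ?g [m, x] (sem E (\<lambda>w. if w = 0 then x else m))"
      by (rule comp_correct) (use assms(1) in auto)
    moreover have "sem E (\<lambda>w. if w = 0 then x else m) = sem E (\<lambda>_. x)"
      by (rule sem_cong) (use assms(1) in auto)
    ultimately show ?thesis by simp
  qed
  show ?thesis
    unfolding ce_def
  proof (rule exI[of _ "Mn ?g"], intro allI iffI)
    fix x assume "x \<in> A"
    then have "eval ?g [0, x] 0" using ev[of 0 x] assms(2) by simp
    then show "\<exists>y. eval (Mn ?g) [x] y" by (auto intro!: eval_Mn)
  next
    fix x assume "\<exists>y. eval (Mn ?g) [x] y"
    then obtain y where "eval (Mn ?g) [x] y" by blast
    then have "eval ?g [y, x] 0" by (cases rule: eval.cases) auto
    then have "sem E (\<lambda>_. x) = 0" using eval_det ev by blast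
    then show "x \<in> A" using assms(2) by simp
  qed
qed


abbreviation pe where "pe x y \<equiv> prod_encode (x, y)"
abbreviation pd where "pd \<equiv> prod_decode"

definition outmem :: "bsent set \<Rightarrow> nat \<Rightarrow> bool" where
  "outmem X e \<longleftrightarrow> (\<exists>x y z. e = pe x y \<and> y < z \<and>
      ((Lt x y \<in> X \<and> Lt z x \<in> X) \<or> (Lt y x \<in> X \<and> Lt x z \<in> X)))"

fun OutP :: "bsent set \<Rightarrow> bsent \<Rightarrow> bool" where
  "OutP X (Eq e e') = (e = e' \<and> outmem X e)"
| "OutP X (NEq e e') = (e \<noteq> e' \<and> outmem X e \<and> outmem X e')"
| "OutP X (Lt e e') = (outmem X e \<and> outmem X e' \<and>
     (Lt (fst (pd e)) (fst (pd e')) \<in> X \<or> (fst (pd e) = fst (pd e') \<and> Lt (snd (pd e)) (snd (pd e')) \<in> X)))"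
| "OutP X (NLt e e') = (outmem X e \<and> outmem X e' \<and>
     NLt (fst (pd e)) (fst (pd e')) \<in> X \<and> (fst (pd e) \<noteq> fst (pd e') \<or> NLt (snd (pd e)) (snd (pd e')) \<in> X))"

definition Gam :: "(bsent set \<times> bsent) set" where
  "Gam = {(\<alpha>, \<phi>). finite \<alpha> \<and> OutP \<alpha> \<phi>}"

lemma bs_code_inj: "bs_code s = bs_code s' \<Longrightarrow> s = s'"
  by (cases s; cases s') (auto, presburger+)

lemma bs_code_surj: "\<exists>s. bs_code s = k"
proof -
  obtain a b where ab: "prod_decode (k div 4) = (a, b)" by (cases "prod_decode (k div 4)")
  then have e: "pe a b = k div 4" by (metis prod_decode_inverse)
  have "k mod 4 = 0 \<or> k mod 4 = 1 \<or> k mod 4 = 2 \<or> k mod 4 = 3" by auto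
  moreover have k: "k = 4 * pe a b + k mod 4" using e by simp
  ultimately show ?thesis
  proof (elim disjE)
    assume "k mod 4 = 0" then show ?thesis using k by (intro exI[of _ "Eq a b"]) simp
  next
    assume "k mod 4 = 1" then show ?thesis using k by (intro exI[of _ "Lt a b"]) simp
  next
    assume "k mod 4 = 2" then show ?thesis using k by (intro exI[of _ "NEq a b"]) simp
  next
    assume "k mod 4 = 3" then show ?thesis using k by (intro exI[of _ "NLt a b"]) simp
  qed
qed

definition bs_of :: "nat \<Rightarrow> bsent set" where
  "bs_of a = {s. bs_code s \<in> set_decode a}"

lemma finite_bs_of: "finite (bs_of a)"
proof -
  have "bs_of a = bs_code -` set_decode a" by (auto simp: bs_of_def)
  moreover have "finite (bs_code -` set_decode a)"
    by (rule finite_vimageI) (auto simp: inj_on_def intro: bs_code_inj)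
  ultimately show ?thesis by simp
qed

lemma bs_of_encode: "finite \<alpha> \<Longrightarrow> bs_of (set_encode (bs_code ` \<alpha>)) = \<alpha>"
  by (auto simp: bs_of_def dest: bs_code_inj)

lemma encode_bs_of: "set_encode (bs_code ` bs_of a) = a"
proof -
  have "bs_code ` bs_of a = set_decode a"
    using bs_code_surj by (auto simp: bs_of_def) (metis imageI mem_Collect_eq)
  then show ?thesis by simp
qed

definition Sset :: "nat set" where
  "Sset = {prod_encode (set_encode (bs_code ` \<alpha>), bs_code \<phi>) | \<alpha> \<phi>. (\<alpha>, \<phi>) \<in> Gam}"

lemma Sset_iff: "x \<in> Sset \<longleftrightarrow> (\<exists>a c \<phi>. x = pe a c \<and> c = bs_code \<phi> \<and> OutP (bs_of a) \<phi>)"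
proof
  assume "x \<in> Sset"
  then obtain \<alpha> \<phi> where "x = pe (set_encode (bs_code ` \<alpha>)) (bs_code \<phi>)" "finite \<alpha>" "OutP \<alpha> \<phi>"
    by (auto simp: Sset_def Gam_def)
  then show "\<exists>a c \<phi>. x = pe a c \<and> c = bs_code \<phi> \<and> OutP (bs_of a) \<phi>"
    by (metis bs_of_encode)
next
  assume "\<exists>a c \<phi>. x = pe a c \<and> c = bs_code \<phi> \<and> OutP (bs_of a) \<phi>"
  then obtain a \<phi> where x: "x = pe a (bs_code \<phi>)" and o: "OutP (bs_of a) \<phi>" by auto
  have "(bs_of a, \<phi>) \<in> Gam" using finite_bs_of o by (simp add: Gam_def)
  moreover have "x = pe (set_encode (bs_code ` bs_of a)) (bs_code \<phi>)" by (simp add: encode_bs_of x)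
  ultimately show "x \<in> Sset" unfolding Sset_def by blast
qed

definition bitp :: "nat \<Rightarrow> nat \<Rightarrow> bool" where
  "bitp a k \<longleftrightarrow> (\<exists>q<a+1. \<exists>r<2^k. a = (2*q+1)*2^k + r)"

lemma bitp_iff: "bitp a k \<longleftrightarrow> k \<in> set_decode a"
proof
  assume "bitp a k"
  then obtain q r where qr: "r < 2^k" "a = (2*q+1)*2^k + r" by (auto simp: bitp_def)
  then have "a = r + (2*q+1)*2^k" by simp
  then have "a div 2^k = (2*q+1) + r div 2^k" by (metis div_mult_self1 power_not_zero zero_neq_numeral)
  then have "a div 2^k = 2*q+1" using qr(1) by simp
  then show "k \<in> set_decode a" by (simp add: set_decode_def)
next
  assume "k \<in> set_decode a"
  then have o: "odd (a div 2^k)" by (simp add: set_decode_def)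
  let ?q = "a div 2^k div 2" let ?r = "a mod 2^k"
  have "a div 2^k = 2 * ?q + 1" using o by (metis odd_two_times_div_two_succ)
  then have "a = (2 * ?q + 1) * 2^k + ?r" by (metis div_mult_mod_eq)
  moreover have "?q < a + 1"
    using div_le_dividend[of "a div 2^k" 2] div_le_dividend[of a "2^k"] by linarith
  moreover have "?r < 2^k" by simp
  ultimately show "bitp a k" unfolding bitp_def by blast
qed

lemma decode_less: "k \<in> set_decode a \<Longrightarrow> k < a"
proof -
  assume "k \<in> set_decode a"
  then have "odd (a div 2^k)" by (simp add: set_decode_def)
  then have "a div 2^k \<ge> 1" by (cases "a div 2^k") auto
  then have "2^k \<le> a"
    by (metis div_less not_less one_le_numeral le_0_eq zero_neq_one)
  moreover have "k < 2^k" by (rule less_exp)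
  ultimately show "k < a" by linarith
qed

lemma mem_bs_of: "s \<in> bs_of a \<longleftrightarrow> bitp a (bs_code s)"
  by (simp add: bs_of_def bitp_iff)

definition Mp :: "nat \<Rightarrow> nat \<Rightarrow> bool" where
  "Mp a e \<longleftrightarrow> (\<exists>x<e+1. \<exists>y<e+1. e = pe x y \<and> (\<exists>z<a. y < z \<and>
      ((bitp a (4 * pe x y + 1) \<and> bitp a (4 * pe z x + 1)) \<or> (bitp a (4 * pe y x + 1) \<and> bitp a (4 * pe x z + 1)))))"

lemma bitp_bound: "bitp a (4 * pe u v + 1) \<Longrightarrow> u < a"
proof -
  assume "bitp a (4 * pe u v + 1)"
  then have "4 * pe u v + 1 < a" using bitp_iff decode_less by blast
  moreover have "u \<le> pe u v" by (rule le_prod_encode_1)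
  ultimately show ?thesis by linarith
qed

lemma bitp_bound2: "bitp a (4 * pe u v + 1) \<Longrightarrow> v < a"
proof -
  assume "bitp a (4 * pe u v + 1)"
  then have "4 * pe u v + 1 < a" using bitp_iff decode_less by blast
  moreover have "v \<le> pe u v" by (rule le_prod_encode_2)
  ultimately show ?thesis by linarith
qed

lemma pe_bound1: "e = pe x y \<Longrightarrow> x < e + 1" using le_prod_encode_1[of x y] by simp
lemma pe_bound2: "e = pe x y \<Longrightarrow> y < e + 1" using le_prod_encode_2[of y x] by simp

lemma Mp_iff: "Mp a e \<longleftrightarrow> outmem (bs_of a) e"
proof
  assume "Mp a e" then show "outmem (bs_of a) e"
    unfolding Mp_def outmem_def mem_bs_of bs_code.simps by blast
next
  assume "outmem (bs_of a) e"
  then obtain x y z where h: "e = pe x y" "y < z"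
    "(bitp a (4 * pe x y + 1) \<and> bitp a (4 * pe z x + 1)) \<or> (bitp a (4 * pe y x + 1) \<and> bitp a (4 * pe x z + 1))"
    unfolding outmem_def mem_bs_of bs_code.simps by blast
  have "z < a" using h(3) bitp_bound[of a z x] bitp_bound2[of a x z] by blast
  then show "Mp a e" unfolding Mp_def using h pe_bound1[OF h(1)] pe_bound2[OF h(1)] by blast
qed


definition LtC :: "nat \<Rightarrow> nat \<Rightarrow> nat \<Rightarrow> bool" where
  "LtC a e e' \<longleftrightarrow> (\<exists>x<e+1. \<exists>y<e+1. \<exists>x'<e'+1. \<exists>y'<e'+1. e = pe x y \<and> e' = pe x' y' \<and>
     (bitp a (4 * pe x x' + 1) \<or> (x = x' \<and> bitp a (4 * pe y y' + 1))))"
definition NLtC :: "nat \<Rightarrow> nat \<Rightarrow> nat \<Rightarrow> bool" where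
  "NLtC a e e' \<longleftrightarrow> (\<exists>x<e+1. \<exists>y<e+1. \<exists>x'<e'+1. \<exists>y'<e'+1. e = pe x y \<and> e' = pe x' y' \<and>
     bitp a (4 * pe x x' + 3) \<and> (x \<noteq> x' \<or> bitp a (4 * pe y y' + 3)))"
definition Psi :: "nat \<Rightarrow> nat \<Rightarrow> bool" where
  "Psi a c \<longleftrightarrow> (\<exists>e<c+1. \<exists>e'<c+1.
     (c = 4 * pe e e' \<and> e = e' \<and> Mp a e) \<or>
     (c = 4 * pe e e' + 2 \<and> e \<noteq> e' \<and> Mp a e \<and> Mp a e') \<or>
     (c = 4 * pe e e' + 1 \<and> Mp a e \<and> Mp a e' \<and> LtC a e e') \<or>
     (c = 4 * pe e e' + 3 \<and> Mp a e \<and> Mp a e' \<and> NLtC a e e'))"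
definition Phi :: "nat \<Rightarrow> bool" where
  "Phi x \<longleftrightarrow> (\<exists>a<x+1. \<exists>c<x+1. x = pe a c \<and> Psi a c)"

lemma pd_eq: "e = pe x y \<longleftrightarrow> pd e = (x, y)"
  by (metis prod_decode_inverse prod_encode_inverse)

lemma LtC_iff: "LtC a e e' \<longleftrightarrow> (Lt (fst (pd e)) (fst (pd e')) \<in> bs_of a \<or>
     (fst (pd e) = fst (pd e') \<and> Lt (snd (pd e)) (snd (pd e')) \<in> bs_of a))"
proof -
  obtain x y where e: "pd e = (x, y)" by fastforce
  obtain x' y' where e': "pd e' = (x', y')" by fastforce
  have b: "e = pe x y" "e' = pe x' y'" using e e' pd_eq by auto
  show ?thesis unfolding LtC_def mem_bs_of bs_code.simps e e' fst_conv snd_conv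
    using pe_bound1[OF b(1)] pe_bound2[OF b(1)] pe_bound1[OF b(2)] pe_bound2[OF b(2)] b
    by (auto simp del: prod_encode_eq) (metis prod_encode_eq prod.inject)+
qed

lemma NLtC_iff: "NLtC a e e' \<longleftrightarrow> (NLt (fst (pd e)) (fst (pd e')) \<in> bs_of a \<and>
     (fst (pd e) \<noteq> fst (pd e') \<or> NLt (snd (pd e)) (snd (pd e')) \<in> bs_of a))"
proof -
  obtain x y where e: "pd e = (x, y)" by fastforce
  obtain x' y' where e': "pd e' = (x', y')" by fastforce
  have b: "e = pe x y" "e' = pe x' y'" using e e' pd_eq by auto
  show ?thesis unfolding NLtC_def mem_bs_of bs_code.simps e e' fst_conv snd_conv
    using pe_bound1[OF b(1)] pe_bound2[OF b(1)] pe_bound1[OF b(2)] pe_bound2[OF b(2)] b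
    by (auto simp del: prod_encode_eq) (metis prod_encode_eq prod.inject)+
qed

lemma pe_le: "e \<le> pe e e'" "e' \<le> pe e e'"
  using le_prod_encode_1[of e e'] le_prod_encode_2[of e' e] by auto

lemma Psi_iff: "Psi a c \<longleftrightarrow> (\<exists>\<phi>. c = bs_code \<phi> \<and> OutP (bs_of a) \<phi>)"
proof
  assume "Psi a c"
  then show "\<exists>\<phi>. c = bs_code \<phi> \<and> OutP (bs_of a) \<phi>"
    unfolding Psi_def Mp_iff LtC_iff NLtC_iff
    by (elim exE conjE disjE) (metis OutP.simps bs_code.simps)+
next
  assume "\<exists>\<phi>. c = bs_code \<phi> \<and> OutP (bs_of a) \<phi>"
  then obtain \<phi> where p: "c = bs_code \<phi>" "OutP (bs_of a) \<phi>" by blast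
  show "Psi a c"
  proof (cases \<phi>)
    case (Eq e e')
    then have "e < c + 1" "e' < c + 1" using p pe_le[where e=e and e'=e'] by auto
    then show ?thesis using p Eq unfolding Psi_def Mp_iff by auto
  next
    case (Lt e e')
    then have "e < c + 1" "e' < c + 1" using p pe_le[where e=e and e'=e'] by auto
    then show ?thesis using p Lt unfolding Psi_def Mp_iff LtC_iff by auto
  next
    case (NEq e e')
    then have "e < c + 1" "e' < c + 1" using p pe_le[where e=e and e'=e'] by auto
    then show ?thesis using p NEq unfolding Psi_def Mp_iff by auto
  next
    case (NLt e e')
    then have "e < c + 1" "e' < c + 1" using p pe_le[where e=e and e'=e'] by auto
    then show ?thesis using p NLt unfolding Psi_def Mp_iff NLtC_iff by auto
  qed
qed

lemma Phi_iff: "Phi x \<longleftrightarrow> x \<in> Sset"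
  unfolding Phi_def Sset_iff Psi_iff
  using pe_le by (auto simp del: prod_encode_eq) (metis le_imp_less_Suc Suc_eq_plus1)+


lemma sem_upd [simp]: "v \<notin> fv e \<Longrightarrow> sem e (r(v := i)) = sem e r"
  by (rule sem_cong) auto

definition LEe where "LEe a b = Sub (C 1) (Sub a b)"
definition EQe where "EQe a b = Mul (LEe a b) (LEe b a)"
definition LTe where "LTe a b = LEe (Add a (C 1)) b"
definition ORe where "ORe p q = LEe (C 1) (Add p q)"
definition NOTe where "NOTe p = Sub (C 1) p"
definition EXe where "EXe v b p = LEe (C 1) (Sum v b p)"
definition TRIe where "TRIe k = Sum 102 (Add k (C 1)) (V 102)"
definition PEe where "PEe x y = Add (TRIe (Add x y)) x"
definition BITe where "BITe a k = EXe 100 (Add a (C 1)) (EXe 101 (Pw k)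
   (EQe a (Add (Mul (Add (Mul (C 2) (V 100)) (C 1)) (Pw k)) (V 101))))"
definition CDe where "CDe d u v = Add (Mul (C 4) (PEe u v)) (C d)"

lemma fv_simps [simp]:
  "fv (LEe a b) = fv a \<union> fv b" "fv (EQe a b) = fv a \<union> fv b" "fv (LTe a b) = fv a \<union> fv b"
  "fv (ORe a b) = fv a \<union> fv b" "fv (NOTe a) = fv a" "fv (EXe v b p) = fv b \<union> (fv p - {v})"
  "fv (TRIe k) = fv k" "fv (PEe x y) = fv x \<union> fv y" "fv (CDe d x y) = fv x \<union> fv y"
  by (auto simp: LEe_def EQe_def LTe_def ORe_def NOTe_def EXe_def TRIe_def PEe_def CDe_def BITe_def)

lemma fv_BITe [simp]: "100 \<notin> fv a \<Longrightarrow> 101 \<notin> fv a \<Longrightarrow> 100 \<notin> fv k \<Longrightarrow> 101 \<notin> fv k \<Longrightarrow>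
  fv (BITe a k) = fv a \<union> fv k"
  by (auto simp: BITe_def)

lemma of_bool_mult: "(of_bool P :: nat) * of_bool Q = of_bool (P \<and> Q)" by simp
lemma sum_of_bool_ge1: "(1 \<le> (\<Sum>i<(n::nat). (of_bool (P i) :: nat))) \<longleftrightarrow> (\<exists>i<n. P i)"
proof
  assume "1 \<le> (\<Sum>i<n. (of_bool (P i) :: nat))"
  then have nz: "(\<Sum>i<n. (of_bool (P i) :: nat)) \<noteq> 0" by linarith
  show "\<exists>i<n. P i"
  proof (rule ccontr)
    assume "\<not> (\<exists>i<n. P i)"
    then have "(\<Sum>i<n. (of_bool (P i) :: nat)) = 0" by (intro sum.neutral) auto
    then show False using nz by simp
  qed
next
  assume "\<exists>i<n. P i"
  then obtain i where "i < n" "P i" by blast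
  then show "1 \<le> (\<Sum>i<n. (of_bool (P i) :: nat))" by (auto simp: Suc_le_eq card_gt_0_iff)
qed

lemma sem_LEe [simp]: "sem (LEe a b) r = of_bool (sem a r \<le> sem b r)"
  by (simp add: LEe_def)
lemma sem_EQe [simp]: "sem (EQe a b) r = of_bool (sem a r = sem b r)"
  by (auto simp add: EQe_def)
lemma sem_LTe [simp]: "sem (LTe a b) r = of_bool (sem a r < sem b r)"
  by (auto simp add: LTe_def)
lemma sem_ORe [simp]: "sem (ORe (p) (q)) r = of_bool (sem p r \<noteq> 0 \<or> sem q r \<noteq> 0)"
  by (auto simp add: ORe_def)
lemma sem_NOTe [simp]: "sem (NOTe p) r = of_bool (sem p r = 0)"
  by (auto simp add: NOTe_def)
lemma sem_EXe [simp]: "sem (EXe v b p) r = of_bool (\<exists>i<sem b r. sem p (r(v := i)) \<noteq> 0)"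
proof -
  have "(1 \<le> (\<Sum>i<sem b r. sem p (r(v := i)))) \<longleftrightarrow> (\<exists>i<sem b r. sem p (r(v := i)) \<noteq> 0)"
    by (metis (no_types, lifting) One_nat_def gr0I lessThan_iff less_one not_less sum_eq_0_iff finite_lessThan)
  then show ?thesis by (simp add: EXe_def)
qed
lemma tri_sum: "(\<Sum>i<Suc k. i) = triangle k"
  by (induction k) auto
lemma sem_TRIe [simp]: "sem (TRIe k) r = triangle (sem k r)"
  using tri_sum[of "sem k r"] by (simp add: TRIe_def)
lemma sem_PEe [simp]: "sem (PEe x y) r = pe (sem x r) (sem y r)"
  by (simp add: PEe_def prod_encode_def)
lemma sem_CDe [simp]: "sem (CDe d x y) r = 4 * pe (sem x r) (sem y r) + d"
  by (simp add: CDe_def)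
lemma sem_BITe [simp]: "100 \<notin> fv a \<Longrightarrow> 101 \<notin> fv a \<Longrightarrow> 100 \<notin> fv k \<Longrightarrow> 101 \<notin> fv k \<Longrightarrow>
   sem (BITe a k) r = of_bool (bitp (sem a r) (sem k r))"
  by (simp add: BITe_def bitp_def)

lemma EXe_cong: "sem b r = B \<Longrightarrow> (\<And>i. i < B \<Longrightarrow> sem p (r(v:=i)) \<noteq> 0 \<longleftrightarrow> P i) \<Longrightarrow>
   sem (EXe v b p) r = of_bool (\<exists>i<B. P i)"
  by auto

lemma EXe_cong2: "sem b r = B \<Longrightarrow> (\<And>i. i < B \<Longrightarrow> sem p (r(v:=i)) \<noteq> 0 \<longleftrightarrow> P i) \<Longrightarrow>
   sem (EXe v b p) r \<noteq> 0 \<longleftrightarrow> (\<exists>i<B. P i)"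
  by auto

definition MpE where "MpE A E = EXe 5 (Add E (C 1)) (EXe 6 (Add E (C 1))
   (Mul (EQe E (PEe (V 5) (V 6))) (EXe 7 A (Mul (LTe (V 6) (V 7))
     (ORe (Mul (BITe A (CDe 1 (V 5) (V 6))) (BITe A (CDe 1 (V 7) (V 5))))
          (Mul (BITe A (CDe 1 (V 6) (V 5))) (BITe A (CDe 1 (V 5) (V 7)))))))))"

lemma sem_MpE3: "sem (MpE (V 1) (V 3)) r = of_bool (Mp (r 1) (r 3))"
  by (simp add: MpE_def Mp_def)
lemma sem_MpE4: "sem (MpE (V 1) (V 4)) r = of_bool (Mp (r 1) (r 4))"
  by (simp add: MpE_def Mp_def)

definition LtCE :: "nat \<Rightarrow> aexp \<Rightarrow> aexp \<Rightarrow> aexp \<Rightarrow> aexp" where "LtCE d A E1 E2 = EXe 8 (Add E1 (C 1)) (EXe 9 (Add E1 (C 1))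
  (EXe 10 (Add E2 (C 1)) (EXe 11 (Add E2 (C 1))
   (Mul (EQe E1 (PEe (V 8) (V 9))) (Mul (EQe E2 (PEe (V 10) (V 11)))
     (if d = 1 then ORe (BITe A (CDe 1 (V 8) (V 10))) (Mul (EQe (V 8) (V 10)) (BITe A (CDe 1 (V 9) (V 11))))
      else Mul (BITe A (CDe 3 (V 8) (V 10))) (ORe (NOTe (EQe (V 8) (V 10))) (BITe A (CDe 3 (V 9) (V 11))))))))))"

lemma sem_LtCE1: "sem (LtCE 1 (V 1) (V 3) (V 4)) r = of_bool (LtC (r 1) (r 3) (r 4))"
  unfolding LtCE_def LtC_def
  by (rule EXe_cong, simp, (rule EXe_cong2, simp)+, (simp del: prod_encode_eq; blast))
lemma sem_LtCE3: "sem (LtCE 3 (V 1) (V 3) (V 4)) r = of_bool (NLtC (r 1) (r 3) (r 4))"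
  unfolding LtCE_def NLtC_def
  by (rule EXe_cong, simp, (rule EXe_cong2, simp)+, (simp del: prod_encode_eq; blast))

definition PsiE :: aexp where "PsiE = EXe 3 (Add (V 2) (C 1)) (EXe 4 (Add (V 2) (C 1))
  (ORe (ORe (Mul (Mul (EQe (V 2) (CDe 0 (V 3) (V 4))) (EQe (V 3) (V 4))) (MpE (V 1) (V 3)))
            (Mul (Mul (EQe (V 2) (CDe 2 (V 3) (V 4))) (NOTe (EQe (V 3) (V 4)))) (Mul (MpE (V 1) (V 3)) (MpE (V 1) (V 4)))))
       (ORe (Mul (EQe (V 2) (CDe 1 (V 3) (V 4))) (Mul (Mul (MpE (V 1) (V 3)) (MpE (V 1) (V 4))) (LtCE 1 (V 1) (V 3) (V 4))))
            (Mul (EQe (V 2) (CDe 3 (V 3) (V 4))) (Mul (Mul (MpE (V 1) (V 3)) (MpE (V 1) (V 4))) (LtCE 3 (V 1) (V 3) (V 4)))))))"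

lemma sem_PsiE: "sem PsiE r = of_bool (Psi (r 1) (r 2))"
  unfolding PsiE_def Psi_def
  apply (rule EXe_cong[where B="r 2 + 1"])
  apply simp
  apply (rule EXe_cong2)
  apply simp
  apply (simp add: sem_MpE3[unfolded One_nat_def] sem_MpE4[unfolded One_nat_def]
     sem_LtCE1[unfolded One_nat_def] sem_LtCE3[unfolded One_nat_def] del: prod_encode_eq)
  apply blast
  done

definition PhiE :: aexp where "PhiE = NOTe (EXe 1 (Add (V 0) (C 1)) (EXe 2 (Add (V 0) (C 1))
   (Mul (EQe (V 0) (PEe (V 1) (V 2))) PsiE)))"

lemma fv_PhiE: "fv PhiE \<subseteq> {0}"
  by (auto simp: PhiE_def PsiE_def MpE_def LtCE_def)

lemma sem_PhiE: "sem PhiE (\<lambda>_. x) = 0 \<longleftrightarrow> Phi x"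
proof -
  have "sem (EXe 1 (Add (V 0) (C 1)) (EXe 2 (Add (V 0) (C 1))
   (Mul (EQe (V 0) (PEe (V 1) (V 2))) PsiE))) (\<lambda>_. x) \<noteq> 0 \<longleftrightarrow> Phi x"
    unfolding Phi_def
    by (rule EXe_cong2, simp, rule EXe_cong2, simp, (simp add: sem_PsiE del: prod_encode_eq; blast))
  then show ?thesis unfolding PhiE_def by simp
qed

lemma enum_op_Gam: "enum_op Gam"
  unfolding enum_op_def
proof
  show "\<forall>(\<alpha>, \<phi>)\<in>Gam. finite \<alpha>" by (auto simp: Gam_def)
  show "ce {prod_encode (set_encode (bs_code ` \<alpha>), bs_code \<phi>) | \<alpha> \<phi>. (\<alpha>, \<phi>) \<in> Gam}"
  proof -
    have "ce Sset" by (rule ce_from_aexp[OF fv_PhiE]) (simp add: sem_PhiE Phi_iff)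
    then show ?thesis by (simp add: Sset_def)
  qed
qed



definition lin :: "lstr \<Rightarrow> bool" where
  "lin A \<longleftrightarrow> (\<forall>x\<in>fst A. \<not> snd A x x) \<and>
     (\<forall>x\<in>fst A. \<forall>y\<in>fst A. \<forall>z\<in>fst A. snd A x y \<longrightarrow> snd A y z \<longrightarrow> snd A x z) \<and>
     (\<forall>x\<in>fst A. \<forall>y\<in>fst A. x \<noteq> y \<longrightarrow> snd A x y \<or> snd A y x)"

lemma linD:
  assumes "lin A"
  shows "x \<in> fst A \<Longrightarrow> \<not> snd A x x"
    and "x \<in> fst A \<Longrightarrow> y \<in> fst A \<Longrightarrow> z \<in> fst A \<Longrightarrow> snd A x y \<Longrightarrow> snd A y z \<Longrightarrow> snd A x z"
    and "x \<in> fst A \<Longrightarrow> y \<in> fst A \<Longrightarrow> x \<noteq> y \<Longrightarrow> snd A x y \<or> snd A y x"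
    and "x \<in> fst A \<Longrightarrow> y \<in> fst A \<Longrightarrow> snd A x y \<Longrightarrow> \<not> snd A y x"
proof -
  have LL: "(\<forall>x\<in>fst A. \<not> snd A x x) \<and>
     (\<forall>x\<in>fst A. \<forall>y\<in>fst A. \<forall>z\<in>fst A. snd A x y \<longrightarrow> snd A y z \<longrightarrow> snd A x z) \<and>
     (\<forall>x\<in>fst A. \<forall>y\<in>fst A. x \<noteq> y \<longrightarrow> snd A x y \<or> snd A y x)"
    using assms unfolding lin_def .
  note L1 = conjunct1[OF LL] and L2 = conjunct1[OF conjunct2[OF LL]] and L3 = conjunct2[OF conjunct2[OF LL]]
  show "x \<in> fst A \<Longrightarrow> \<not> snd A x x" by (rule L1[rule_format])
  show "x \<in> fst A \<Longrightarrow> y \<in> fst A \<Longrightarrow> z \<in> fst A \<Longrightarrow> snd A x y \<Longrightarrow> snd A y z \<Longrightarrow> snd A x z"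
    by (rule L2[rule_format])
  show "x \<in> fst A \<Longrightarrow> y \<in> fst A \<Longrightarrow> x \<noteq> y \<Longrightarrow> snd A x y \<or> snd A y x"
    by (rule L3[rule_format])
  show "x \<in> fst A \<Longrightarrow> y \<in> fst A \<Longrightarrow> snd A x y \<Longrightarrow> \<not> snd A y x"
    using L2[rule_format, of x y x] L1[rule_format, of x] by blast
qed

lemma iso_refl: "iso A A"
  unfolding iso_def by (rule exI[of _ id]) auto

lemma iso_sym: assumes "iso A B" shows "iso B A"
proof -
  obtain h where h: "bij_betw h (fst A) (fst B)" "\<forall>x\<in>fst A. \<forall>y\<in>fst A. snd A x y \<longleftrightarrow> snd B (h x) (h y)"
    using assms unfolding iso_def by blast
  let ?g = "the_inv_into (fst A) h"
  have g: "bij_betw ?g (fst B) (fst A)" by (rule bij_betw_the_inv_into[OF h(1)])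
  have "\<forall>x\<in>fst B. \<forall>y\<in>fst B. snd B x y \<longleftrightarrow> snd A (?g x) (?g y)"
  proof (intro ballI)
    fix x y assume "x \<in> fst B" "y \<in> fst B"
    then have a: "?g x \<in> fst A" "?g y \<in> fst A" "h (?g x) = x" "h (?g y) = y"
      using bij_betw_apply[OF g] f_the_inv_into_f_bij_betw[OF h(1)] by auto
    show "snd B x y \<longleftrightarrow> snd A (?g x) (?g y)" using h(2)[rule_format, OF a(1) a(2)] a(3,4) by simp
  qed
  then show ?thesis using g unfolding iso_def by blast
qed

lemma iso_trans: assumes "iso A B" "iso B D" shows "iso A D"
proof -
  obtain h where h: "bij_betw h (fst A) (fst B)" "\<forall>x\<in>fst A. \<forall>y\<in>fst A. snd A x y \<longleftrightarrow> snd B (h x) (h y)"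
    using assms(1) unfolding iso_def by blast
  obtain g where g: "bij_betw g (fst B) (fst D)" "\<forall>x\<in>fst B. \<forall>y\<in>fst B. snd B x y \<longleftrightarrow> snd D (g x) (g y)"
    using assms(2) unfolding iso_def by blast
  have "bij_betw (g \<circ> h) (fst A) (fst D)" using h(1) g(1) by (rule bij_betw_trans)
  moreover have "\<forall>x\<in>fst A. \<forall>y\<in>fst A. snd A x y \<longleftrightarrow> snd D ((g \<circ> h) x) ((g \<circ> h) y)"
  proof (intro ballI)
    fix x y assume xy: "x \<in> fst A" "y \<in> fst A"
    have "h x \<in> fst B" "h y \<in> fst B" using bij_betw_apply[OF h(1)] xy by auto
    then show "snd A x y \<longleftrightarrow> snd D ((g \<circ> h) x) ((g \<circ> h) y)"
      using h(2)[rule_format, OF xy] g(2)[rule_format, of "h x" "h y"] by simp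
  qed
  ultimately show ?thesis unfolding iso_def by blast
qed

lemma iso_lin: "iso A B \<Longrightarrow> lin B \<Longrightarrow> lin A"
proof -
  assume IA: "iso A B" and LB: "lin B"
  from IA obtain h where h: "bij_betw h (fst A) (fst B)" "\<forall>x\<in>fst A. \<forall>y\<in>fst A. snd A x y \<longleftrightarrow> snd B (h x) (h y)"
    unfolding iso_def by blast
  have hh: "\<And>x y. x \<in> fst A \<Longrightarrow> y \<in> fst A \<Longrightarrow> snd A x y \<longleftrightarrow> snd B (h x) (h y)"
    by (rule h(2)[rule_format])
  have m: "x \<in> fst A \<Longrightarrow> h x \<in> fst B" for x by (rule bij_betw_apply[OF h(1)])
  have i: "inj_on h (fst A)" by (rule bij_betw_imp_inj_on[OF h(1)])
  note l = linD[OF LB]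
  show "lin A" unfolding lin_def
  proof (intro conjI ballI impI)
    fix x assume x: "x \<in> fst A" then show "\<not> snd A x x" using hh[OF x x] l(1)[OF m[OF x]] by simp
  next
    fix x y z assume xyz: "x \<in> fst A" "y \<in> fst A" "z \<in> fst A" and a: "snd A x y" "snd A y z"
    then have "snd B (h x) (h y)" "snd B (h y) (h z)" using hh by simp_all
    then have "snd B (h x) (h z)" using l(2)[OF m[OF xyz(1)] m[OF xyz(2)] m[OF xyz(3)]] by simp
    then show "snd A x z" using hh[OF xyz(1) xyz(3)] by simp
  next
    fix x y assume xy: "x \<in> fst A" "y \<in> fst A" "x \<noteq> y"
    then have "h x \<noteq> h y" using i by (auto dest: inj_onD)
    then have "snd B (h x) (h y) \<or> snd B (h y) (h x)" using l(3)[OF m[OF xy(1)] m[OF xy(2)]] by simp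
    then show "snd A x y \<or> snd A y x" using hh[OF xy(1) xy(2)] hh[OF xy(2) xy(1)] by simp
  qed
qed

definition wl :: "nat set \<Rightarrow> (nat \<Rightarrow> nat \<Rightarrow> bool) \<Rightarrow> bool" where
  "wl F R \<longleftrightarrow> infinite F \<and> (\<forall>x\<in>F. finite {y\<in>F. R y x})"

definition rk :: "nat set \<Rightarrow> (nat \<Rightarrow> nat \<Rightarrow> bool) \<Rightarrow> nat \<Rightarrow> nat" where
  "rk F R x = card {y\<in>F. R y x}"

lemma rank_props:
  assumes L: "lin (F, R)" and W: "wl F R"
  shows "bij_betw (rk F R) F UNIV" and "\<And>x y. x \<in> F \<Longrightarrow> y \<in> F \<Longrightarrow> R x y \<longleftrightarrow> rk F R x < rk F R y"
proof -
  note l = linD[OF L, simplified]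
  have fin: "x \<in> F \<Longrightarrow> finite {y\<in>F. R y x}" for x using W by (auto simp: wl_def)
  have mono: "rk F R x < rk F R y" if "x \<in> F" "y \<in> F" "R x y" for x y
  proof -
    have s1: "{z\<in>F. R z x} \<subseteq> {z\<in>F. R z y}"
    proof
      fix z assume "z \<in> {z\<in>F. R z x}"
      then have "z \<in> F" "R z x" by auto
      then have "R z y" using l(2)[of z x y] that by blast
      then show "z \<in> {z\<in>F. R z y}" using \<open>z \<in> F\<close> by simp
    qed
    have "x \<in> {z\<in>F. R z y}" "x \<notin> {z\<in>F. R z x}" using that l(1)[of x] by auto
    then have "{z\<in>F. R z x} \<subset> {z\<in>F. R z y}" using s1 by blast
    then show ?thesis unfolding rk_def by (rule psubset_card_mono[OF fin[OF \<open>y \<in> F\<close>]])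
  qed
  show ord: "R x y \<longleftrightarrow> rk F R x < rk F R y" if "x \<in> F" "y \<in> F" for x y
  proof
    assume "R x y" then show "rk F R x < rk F R y" by (rule mono[OF that])
  next
    assume lt: "rk F R x < rk F R y"
    show "R x y"
    proof (rule ccontr)
      assume "\<not> R x y"
      then have "x = y \<or> R y x" using l(3)[OF that] by blast
      then show False using mono[OF that(2,1)] lt by auto
    qed
  qed
  have inj: "inj_on (rk F R) F"
  proof (rule inj_onI)
    fix x y assume xy: "x \<in> F" "y \<in> F" "rk F R x = rk F R y"
    show "x = y"
    proof (rule ccontr)
      assume "x \<noteq> y"
      then have "R x y \<or> R y x" using l(3)[OF xy(1,2)] by blast
      then show False using mono[OF xy(1,2)] mono[OF xy(2,1)] xy(3) by auto
    qed
  qed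
  have surj: "k \<in> rk F R ` F" for k
  proof -
    have "infinite (rk F R ` F)" using inj W by (auto simp: wl_def dest: finite_imageD)
    then have "\<not> (\<forall>n\<in>rk F R ` F. n < Suc k)" using finite_nat_set_iff_bounded by blast
    then obtain y where y0: "y \<in> F" "\<not> rk F R y < Suc k" by auto
    then have y: "y \<in> F" "rk F R y > k" by auto
    let ?P = "{z\<in>F. R z y}"
    have sub: "rk F R ` ?P \<subseteq> {..<rk F R y}"
    proof
      fix m assume "m \<in> rk F R ` ?P"
      then obtain z where "z \<in> F" "R z y" "m = rk F R z" by blast
      then show "m \<in> {..<rk F R y}" using mono[of z y] y(1) by simp
    qed
    have "card (rk F R ` ?P) = card ?P" using inj by (intro card_image) (auto intro: inj_on_subset)
    also have "\<dots> = rk F R y" by (simp add: rk_def)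
    finally have "rk F R ` ?P = {..<rk F R y}"
      using sub by (intro card_subset_eq) auto
    then show ?thesis using y(2) by blast
  qed
  show "bij_betw (rk F R) F UNIV" unfolding bij_betw_def using inj surj by blast
qed

definition can :: "lstr \<Rightarrow> lstr" where
  "can Q = ({pe q k | q k. q \<in> fst Q}, \<lambda>a b. snd Q (fst (pd a)) (fst (pd b)) \<or>
            (fst (pd a) = fst (pd b) \<and> snd (pd a) < snd (pd b)))"

lemma lin_sub: assumes "lin A" "F \<subseteq> fst A" shows "lin (F, snd A)"
proof -
  note l = linD[OF assms(1)]
  show ?thesis unfolding lin_def fst_conv snd_conv
  proof (intro conjI ballI impI)
    fix x assume "x \<in> F" then show "\<not> snd A x x" using l(1) assms(2) by blast
  next
    fix x y z assume "x \<in> F" "y \<in> F" "z \<in> F" "snd A x y" "snd A y z"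
    then show "snd A x z" using l(2)[of x y z] assms(2) by blast
  next
    fix x y assume "x \<in> F" "y \<in> F" "x \<noteq> y"
    then show "snd A x y \<or> snd A y x" using l(3)[of x y] assms(2) by blast
  qed
qed

lemma fiber_iso:
  assumes LP: "lin P" and LQ: "lin Q" and im: "\<pi> ` fst P = fst Q"
    and mono: "\<And>p q. p \<in> fst P \<Longrightarrow> q \<in> fst P \<Longrightarrow> snd Q (\<pi> p) (\<pi> q) \<Longrightarrow> snd P p q"
    and W: "\<And>e. e \<in> fst Q \<Longrightarrow> wl {p\<in>fst P. \<pi> p = e} (snd P)"
  shows "iso P (can Q)"
proof -
  define Fb where "Fb e = {p\<in>fst P. \<pi> p = e}" for e
  define r where "r p = rk (Fb (\<pi> p)) (snd P) p" for p
  have Lf: "lin (Fb e, snd P)" for e by (rule lin_sub[OF LP]) (auto simp: Fb_def)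
  have Wf: "e \<in> fst Q \<Longrightarrow> wl (Fb e) (snd P)" for e using W by (simp add: Fb_def)
  note rp = rank_props[OF Lf Wf]
  note lp = linD[OF LP] and lq = linD[OF LQ]
  have piQ: "p \<in> fst P \<Longrightarrow> \<pi> p \<in> fst Q" for p using im by blast
  have inF: "p \<in> fst P \<Longrightarrow> p \<in> Fb (\<pi> p)" for p by (simp add: Fb_def)
  define h where "h p = pe (\<pi> p) (r p)" for p
  have ord: "snd P p q \<longleftrightarrow> snd Q (\<pi> p) (\<pi> q) \<or> (\<pi> p = \<pi> q \<and> r p < r q)"
    if "p \<in> fst P" "q \<in> fst P" for p q
  proof (cases "\<pi> p = \<pi> q")
    case True
    have q: "q \<in> Fb (\<pi> p)" using inF[OF that(2)] True by simp
    have "snd P p q \<longleftrightarrow> rk (Fb (\<pi> p)) (snd P) p < rk (Fb (\<pi> p)) (snd P) q"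
      by (rule rp(2)[OF piQ[OF that(1)] inF[OF that(1)] q])
    moreover have "\<not> snd Q (\<pi> p) (\<pi> p)" by (rule lq(1)[OF piQ[OF that(1)]])
    ultimately show ?thesis by (simp add: r_def True)
  next
    case False
    then have "snd Q (\<pi> p) (\<pi> q) \<or> snd Q (\<pi> q) (\<pi> p)" using lq(3)[OF piQ[OF that(1)] piQ[OF that(2)]] by blast
    then show ?thesis
    proof
      assume "snd Q (\<pi> p) (\<pi> q)" then show ?thesis using mono[OF that] by simp
    next
      assume a: "snd Q (\<pi> q) (\<pi> p)"
      then have "snd P q p" using mono[OF that(2,1)] by simp
      then have "\<not> snd P p q" using lp(4)[OF that(2,1)] by simp
      moreover have "\<not> snd Q (\<pi> p) (\<pi> q)" using lq(4)[OF piQ[OF that(2)] piQ[OF that(1)] a] .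
      ultimately show ?thesis using False by simp
    qed
  qed
  have bij: "bij_betw h (fst P) (fst (can Q))"
    unfolding bij_betw_def
  proof
    show "inj_on h (fst P)"
    proof (rule inj_onI)
      fix p q assume pq: "p \<in> fst P" "q \<in> fst P" "h p = h q"
      then have e: "\<pi> p = \<pi> q" "r p = r q" by (auto simp: h_def)
      have ij: "inj_on (rk (Fb (\<pi> p)) (snd P)) (Fb (\<pi> p))"
        using rp(1)[OF piQ[OF pq(1)]] by (simp add: bij_betw_def)
      have "q \<in> Fb (\<pi> p)" using inF[OF pq(2)] e by simp
      moreover have "rk (Fb (\<pi> p)) (snd P) p = rk (Fb (\<pi> p)) (snd P) q" using e by (simp add: r_def)
      ultimately show "p = q" using inj_onD[OF ij _ inF[OF pq(1)]] by blast
    qed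
    show "h ` fst P = fst (can Q)"
    proof
      show "h ` fst P \<subseteq> fst (can Q)" using piQ by (auto simp: h_def can_def)
      show "fst (can Q) \<subseteq> h ` fst P"
      proof
        fix a assume "a \<in> fst (can Q)"
        then obtain e k where a: "a = pe e k" "e \<in> fst Q" by (auto simp: can_def)
        have "k \<in> rk (Fb e) (snd P) ` Fb e" using rp(1)[OF a(2)] by (simp add: bij_betw_def)
        then obtain p where p: "p \<in> Fb e" "rk (Fb e) (snd P) p = k" by blast
        then have "p \<in> fst P" "\<pi> p = e" by (auto simp: Fb_def)
        then show "a \<in> h ` fst P" using p a by (auto simp: h_def r_def)
      qed
    qed
  qed
  show ?thesis unfolding iso_def
  proof (intro exI conjI)
    show "bij_betw h (fst P) (fst (can Q))" by (rule bij)
    show "\<forall>x\<in>fst P. \<forall>y\<in>fst P. snd P x y = snd (can Q) (h x) (h y)"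
    proof (intro ballI)
      fix x y assume "x \<in> fst P" "y \<in> fst P"
      then show "snd P x y = snd (can Q) (h x) (h y)" using ord[of x y] by (simp add: can_def h_def)
    qed
  qed
qed

lemma can_iso: assumes "iso Q Q'" shows "iso (can Q) (can Q')"
proof -
  obtain h where h: "bij_betw h (fst Q) (fst Q')" "\<forall>x\<in>fst Q. \<forall>y\<in>fst Q. snd Q x y \<longleftrightarrow> snd Q' (h x) (h y)"
    using assms unfolding iso_def by blast
  define g where "g a = pe (h (fst (pd a))) (snd (pd a))" for a
  have ij: "inj_on h (fst Q)" by (rule bij_betw_imp_inj_on[OF h(1)])
  have hm: "x \<in> fst Q \<Longrightarrow> h x \<in> fst Q'" for x by (rule bij_betw_apply[OF h(1)])
  have mem: "a \<in> fst (can Q) \<longleftrightarrow> fst (pd a) \<in> fst Q" for a Q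
    by (auto simp: can_def) (metis prod.collapse prod_decode_inverse)
  have bij: "bij_betw g (fst (can Q)) (fst (can Q'))"
    unfolding bij_betw_def
  proof
    show "inj_on g (fst (can Q))"
    proof (rule inj_onI)
      fix a b assume ab: "a \<in> fst (can Q)" "b \<in> fst (can Q)" "g a = g b"
      then have "h (fst (pd a)) = h (fst (pd b))" "snd (pd a) = snd (pd b)" by (auto simp: g_def)
      moreover have "fst (pd a) \<in> fst Q" "fst (pd b) \<in> fst Q" using ab mem by auto
      ultimately have "fst (pd a) = fst (pd b)" "snd (pd a) = snd (pd b)" using inj_onD[OF ij] by auto
      then have "pd a = pd b" by (simp add: prod_eq_iff)
      then show "a = b" by simp
    qed
    show "g ` fst (can Q) = fst (can Q')"
    proof
      show "g ` fst (can Q) \<subseteq> fst (can Q')"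
      proof
        fix b assume "b \<in> g ` fst (can Q)"
        then obtain a where "a \<in> fst (can Q)" "b = g a" by blast
        then show "b \<in> fst (can Q')" using mem hm by (simp add: g_def)
      qed
      show "fst (can Q') \<subseteq> g ` fst (can Q)"
      proof
        fix a assume "a \<in> fst (can Q')"
        then obtain e k where a: "a = pe e k" "e \<in> fst Q'" by (auto simp: can_def)
        then obtain q where "q \<in> fst Q" "h q = e" using h(1) by (metis bij_betw_def imageE)
        moreover have "pe q k \<in> fst (can Q)" using \<open>q \<in> fst Q\<close> by (auto simp: can_def)
        ultimately show "a \<in> g ` fst (can Q)" using a
          by (intro image_eqI[where x="pe q k"]) (auto simp: g_def)
      qed
    qed
  qed
  show ?thesis unfolding iso_def
  proof (intro exI conjI)
    show "bij_betw g (fst (can Q)) (fst (can Q'))" by (rule bij)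
    show "\<forall>x\<in>fst (can Q). \<forall>y\<in>fst (can Q). snd (can Q) x y = snd (can Q') (g x) (g y)"
    proof (intro ballI)
      fix a b assume ab: "a \<in> fst (can Q)" "b \<in> fst (can Q)"
      then have q: "fst (pd a) \<in> fst Q" "fst (pd b) \<in> fst Q" using mem by auto
      have "snd Q (fst (pd a)) (fst (pd b)) \<longleftrightarrow> snd Q' (h (fst (pd a))) (h (fst (pd b)))"
        using h(2) q by blast
      moreover have "fst (pd a) = fst (pd b) \<longleftrightarrow> h (fst (pd a)) = h (fst (pd b))"
        using inj_onD[OF ij _ q] by auto
      ultimately show "snd (can Q) a b = snd (can Q') (g a) (g b)"
        by (simp add: can_def g_def)
    qed
  qed
qed

lemma lin_can: assumes "lin Q" shows "lin (can Q)"
proof -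
  note l = linD[OF assms]
  have mem: "a \<in> fst (can Q) \<longleftrightarrow> fst (pd a) \<in> fst Q" for a
    by (auto simp: can_def) (metis prod.collapse prod_decode_inverse)
  show ?thesis unfolding lin_def
  proof (intro conjI ballI impI)
    fix x assume "x \<in> fst (can Q)"
    then show "\<not> snd (can Q) x x" using l(1) mem by (simp add: can_def)
  next
    fix x y z assume xyz: "x \<in> fst (can Q)" "y \<in> fst (can Q)" "z \<in> fst (can Q)"
      and a: "snd (can Q) x y" "snd (can Q) y z"
    have q: "fst (pd x) \<in> fst Q" "fst (pd y) \<in> fst Q" "fst (pd z) \<in> fst Q" using xyz mem by auto
    show "snd (can Q) x z"
      using a l(2)[OF q] by (auto simp: can_def)
  next
    fix x y assume xy: "x \<in> fst (can Q)" "y \<in> fst (can Q)" "x \<noteq> y"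
    have q: "fst (pd x) \<in> fst Q" "fst (pd y) \<in> fst Q" using xy mem by auto
    have "pd x \<noteq> pd y" using xy(3) by simp
    then have d: "fst (pd x) \<noteq> fst (pd y) \<or> snd (pd x) \<noteq> snd (pd y)" by (simp add: prod_eq_iff)
    show "snd (can Q) x y \<or> snd (can Q) y x"
    proof (cases "fst (pd x) = fst (pd y)")
      case True
      then have "snd (pd x) < snd (pd y) \<or> snd (pd y) < snd (pd x)" using d by auto
      then show ?thesis using True by (auto simp: can_def)
    next
      case False
      then show ?thesis using l(3)[OF q False] by (auto simp: can_def)
    qed
  qed
qed


definition cnd :: "lstr \<Rightarrow> nat \<Rightarrow> nat \<Rightarrow> bool" where
  "cnd A x y \<longleftrightarrow> x \<in> fst A \<and> y \<in> fst A \<and> (\<exists>z\<in>fst A. y < z \<and>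
     ((snd A x y \<and> snd A z x) \<or> (snd A y x \<and> snd A x z)))"

definition outS :: "lstr \<Rightarrow> lstr" where
  "outS A = ({pe x y | x y. cnd A x y},
     \<lambda>a b. snd A (fst (pd a)) (fst (pd b)) \<or> (fst (pd a) = fst (pd b) \<and> snd A (snd (pd a)) (snd (pd b))))"

lemma Lt_diag: "Lt u v \<in> diag A \<longleftrightarrow> u \<in> fst A \<and> v \<in> fst A \<and> snd A u v"
  by (auto simp: diag_def Let_def)
lemma NLt_diag: "NLt u v \<in> diag A \<longleftrightarrow> u \<in> fst A \<and> v \<in> fst A \<and> \<not> snd A u v"
  by (auto simp: diag_def Let_def)
lemma Eq_diag: "Eq u v \<in> diag A \<longleftrightarrow> u \<in> fst A \<and> v \<in> fst A \<and> u = v"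
  by (auto simp: diag_def Let_def)
lemma NEq_diag: "NEq u v \<in> diag A \<longleftrightarrow> u \<in> fst A \<and> v \<in> fst A \<and> u \<noteq> v"
  by (auto simp: diag_def Let_def)

lemma outmem_diag: "outmem (diag A) e \<longleftrightarrow> e \<in> fst (outS A)"
proof
  assume "outmem (diag A) e"
  then obtain x y z where "e = pe x y" "y < z" "(Lt x y \<in> diag A \<and> Lt z x \<in> diag A) \<or> (Lt y x \<in> diag A \<and> Lt x z \<in> diag A)"
    unfolding outmem_def by blast
  then show "e \<in> fst (outS A)" unfolding outS_def cnd_def Lt_diag by auto
next
  assume "e \<in> fst (outS A)"
  then obtain x y z where "e = pe x y" "x \<in> fst A" "y \<in> fst A" "z \<in> fst A" "y < z"
     "(snd A x y \<and> snd A z x) \<or> (snd A y x \<and> snd A x z)"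
    unfolding outS_def cnd_def by auto
  then show "outmem (diag A) e" unfolding outmem_def Lt_diag by blast
qed

lemma outS_mem: "e \<in> fst (outS A) \<Longrightarrow> fst (pd e) \<in> fst A \<and> snd (pd e) \<in> fst A"
  by (auto simp: outS_def cnd_def)

lemma OutP_diag: "OutP (diag A) \<phi> \<longleftrightarrow> \<phi> \<in> diag (outS A)"
proof (cases \<phi>)
  case (Eq e e') then show ?thesis by (simp add: Eq_diag outmem_diag) blast
next
  case (NEq e e') then show ?thesis by (simp add: NEq_diag outmem_diag) blast
next
  case (Lt e e')
  show ?thesis
  proof
    assume "OutP (diag A) \<phi>"
    then show "\<phi> \<in> diag (outS A)" using Lt by (auto simp: Lt_diag outmem_diag) (auto simp: outS_def)
  next
    assume "\<phi> \<in> diag (outS A)"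
    then have "e \<in> fst (outS A)" "e' \<in> fst (outS A)" "snd (outS A) e e'" using Lt by (auto simp: Lt_diag)
    then show "OutP (diag A) \<phi>" using Lt outS_mem[of e A] outS_mem[of e' A]
      by (auto simp: Lt_diag outmem_diag outS_def)
  qed
next
  case (NLt e e')
  show ?thesis
  proof
    assume "OutP (diag A) \<phi>"
    then show "\<phi> \<in> diag (outS A)" using NLt by (auto simp: NLt_diag outmem_diag) (auto simp: outS_def)
  next
    assume "\<phi> \<in> diag (outS A)"
    then have "e \<in> fst (outS A)" "e' \<in> fst (outS A)" "\<not> snd (outS A) e e'" using NLt by (auto simp: NLt_diag)
    then show "OutP (diag A) \<phi>" using NLt outS_mem[of e A] outS_mem[of e' A]
      by (auto simp: NLt_diag outmem_diag outS_def)
  qed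
qed

lemma outmem_mono: "X \<subseteq> Y \<Longrightarrow> outmem X e \<Longrightarrow> outmem Y e"
  unfolding outmem_def by blast

lemma OutP_mono: "X \<subseteq> Y \<Longrightarrow> OutP X \<phi> \<Longrightarrow> OutP Y \<phi>"
  by (cases \<phi>) (auto dest: outmem_mono)

lemma outmem_fin: "outmem X e \<Longrightarrow> \<exists>\<alpha>\<subseteq>X. finite \<alpha> \<and> outmem \<alpha> e"
proof -
  assume "outmem X e"
  then obtain x y z where h: "e = pe x y" "y < z" "(Lt x y \<in> X \<and> Lt z x \<in> X) \<or> (Lt y x \<in> X \<and> Lt x z \<in> X)"
    unfolding outmem_def by blast
  let ?a = "{Lt x y, Lt z x, Lt y x, Lt x z} \<inter> X"
  have "outmem ?a e" unfolding outmem_def using h by blast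
  then show ?thesis by (intro exI[of _ ?a]) auto
qed

lemma OutP_fin: "OutP X \<phi> \<Longrightarrow> \<exists>\<alpha>\<subseteq>X. finite \<alpha> \<and> OutP \<alpha> \<phi>"
proof (cases \<phi>)
  case (Eq e e')
  assume "OutP X \<phi>"
  then have "outmem X e" "e = e'" using Eq by auto
  then obtain a where "a \<subseteq> X" "finite a" "outmem a e" using outmem_fin by blast
  then show ?thesis using Eq \<open>e = e'\<close> by auto
next
  case (NEq e e')
  assume "OutP X \<phi>"
  then have m: "outmem X e" "outmem X e'" "e \<noteq> e'" using NEq by auto
  obtain a where a: "a \<subseteq> X" "finite a" "outmem a e" using outmem_fin[OF m(1)] by blast
  obtain b where b: "b \<subseteq> X" "finite b" "outmem b e'" using outmem_fin[OF m(2)] by blast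
  have "outmem (a \<union> b) e" "outmem (a \<union> b) e'" using a(3) b(3) outmem_mono[of a "a \<union> b"] outmem_mono[of b "a \<union> b"] by auto
  then show ?thesis using NEq a b m(3) by (intro exI[of _ "a \<union> b"]) auto
next
  case (Lt e e')
  assume o: "OutP X \<phi>"
  then have m: "outmem X e" "outmem X e'" using Lt by auto
  obtain a where a: "a \<subseteq> X" "finite a" "outmem a e" using outmem_fin[OF m(1)] by blast
  obtain b where b: "b \<subseteq> X" "finite b" "outmem b e'" using outmem_fin[OF m(2)] by blast
  let ?c = "{Lt (fst (pd e)) (fst (pd e')), Lt (snd (pd e)) (snd (pd e'))} \<inter> X"
  let ?d = "a \<union> b \<union> ?c"
  have "outmem ?d e" "outmem ?d e'" using a(3) b(3) outmem_mono[of a ?d] outmem_mono[of b ?d] by auto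
  moreover have "Lt (fst (pd e)) (fst (pd e')) \<in> ?d \<or> (fst (pd e) = fst (pd e') \<and> Lt (snd (pd e)) (snd (pd e')) \<in> ?d)"
    using o Lt by auto
  moreover have "?d \<subseteq> X" "finite ?d" using a b by auto
  ultimately show ?thesis using Lt by (intro exI[of _ ?d]) simp
next
  case (NLt e e')
  assume o: "OutP X \<phi>"
  then have m: "outmem X e" "outmem X e'" using NLt by auto
  obtain a where a: "a \<subseteq> X" "finite a" "outmem a e" using outmem_fin[OF m(1)] by blast
  obtain b where b: "b \<subseteq> X" "finite b" "outmem b e'" using outmem_fin[OF m(2)] by blast
  let ?c = "{NLt (fst (pd e)) (fst (pd e')), NLt (snd (pd e)) (snd (pd e'))} \<inter> X"
  let ?d = "a \<union> b \<union> ?c"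
  have "outmem ?d e" "outmem ?d e'" using a(3) b(3) outmem_mono[of a ?d] outmem_mono[of b ?d] by auto
  moreover have "NLt (fst (pd e)) (fst (pd e')) \<in> ?d \<and> (fst (pd e) \<noteq> fst (pd e') \<or> NLt (snd (pd e)) (snd (pd e')) \<in> ?d)"
    using o NLt by auto
  moreover have "?d \<subseteq> X" "finite ?d" using a b by auto
  ultimately show ?thesis using NLt by (intro exI[of _ ?d]) simp
qed

lemma apply_Gam: "apply_op Gam X = {\<phi>. OutP X \<phi>}"
proof (rule set_eqI)
  fix \<phi>
  have "(\<exists>\<alpha>. (\<alpha>, \<phi>) \<in> Gam \<and> \<alpha> \<subseteq> X) \<longleftrightarrow> OutP X \<phi>"
  proof
    assume "\<exists>\<alpha>. (\<alpha>, \<phi>) \<in> Gam \<and> \<alpha> \<subseteq> X"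
    then obtain \<alpha> where "OutP \<alpha> \<phi>" "\<alpha> \<subseteq> X" by (auto simp: Gam_def)
    then show "OutP X \<phi>" using OutP_mono by blast
  next
    assume "OutP X \<phi>"
    then obtain \<alpha> where "\<alpha> \<subseteq> X" "finite \<alpha>" "OutP \<alpha> \<phi>" using OutP_fin by blast
    then show "\<exists>\<alpha>. (\<alpha>, \<phi>) \<in> Gam \<and> \<alpha> \<subseteq> X" by (auto simp: Gam_def)
  qed
  then show "\<phi> \<in> apply_op Gam X \<longleftrightarrow> \<phi> \<in> {\<phi>. OutP X \<phi>}" by (simp add: apply_op_def)
qed

lemma apply_Gam_diag: "apply_op Gam (diag A) = diag (outS A)"
  unfolding apply_Gam using OutP_diag[of A] by blast


lemma unb: "infinite (S::nat set) \<Longrightarrow> \<exists>z\<in>S. y < z"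
  using finite_nat_set_iff_bounded[of S] by (meson not_less_eq)

lemma W_dom: "fst (times_lo L m) = {pe i x | i x. i < m \<and> x \<in> fst L}"
  by (simp add: times_lo_def)
lemma W_ord: "snd (times_lo L m) a b = (fst (pd a) < fst (pd b) \<or> (fst (pd a) = fst (pd b) \<and> snd L (snd (pd a)) (snd (pd b))))"
  by (simp add: times_lo_def split: prod.split)

locale omA =
  fixes n :: nat and A :: lstr and h :: "nat \<Rightarrow> nat"
  assumes hb: "bij_betw h (fst A) (fst (times_lo omega_lo (Suc n)))"
    and ho: "\<And>x y. x \<in> fst A \<Longrightarrow> y \<in> fst A \<Longrightarrow> snd A x y \<longleftrightarrow> snd (times_lo omega_lo (Suc n)) (h x) (h y)"
begin

abbreviation "D \<equiv> fst A"
abbreviation "R \<equiv> snd A"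
definition ci where "ci x = fst (pd (h x))"
definition mp where "mp x = snd (pd (h x))"

lemma ci_le: "x \<in> D \<Longrightarrow> ci x \<le> n"
proof -
  assume "x \<in> D"
  then have "h x \<in> fst (times_lo omega_lo (Suc n))" using bij_betw_apply[OF hb] by blast
  then obtain i k where "h x = pe i k" "i < Suc n" by (auto simp: W_dom)
  then show ?thesis by (simp add: ci_def)
qed

lemma R_iff: "x \<in> D \<Longrightarrow> y \<in> D \<Longrightarrow> R x y \<longleftrightarrow> ci x < ci y \<or> (ci x = ci y \<and> mp x < mp y)"
  using ho by (simp add: W_ord ci_def mp_def omega_lo_def)

lemma el_eq: "x \<in> D \<Longrightarrow> y \<in> D \<Longrightarrow> ci x = ci y \<Longrightarrow> mp x = mp y \<Longrightarrow> x = y"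
proof -
  assume a: "x \<in> D" "y \<in> D" "ci x = ci y" "mp x = mp y"
  then have "pd (h x) = pd (h y)" by (simp add: ci_def mp_def prod_eq_iff)
  then have "h x = h y" by simp
  then show "x = y" using a(1,2) bij_betw_imp_inj_on[OF hb] by (auto dest: inj_onD)
qed

definition el where "el c k = the_inv_into D h (pe c k)"

lemma el_props: assumes "c \<le> n" shows "el c k \<in> D" "ci (el c k) = c" "mp (el c k) = k"
proof -
  have m: "pe c k \<in> fst (times_lo omega_lo (Suc n))" using assms by (auto simp: W_dom omega_lo_def)
  show "el c k \<in> D" unfolding el_def by (rule bij_betw_apply[OF bij_betw_the_inv_into[OF hb] m])
  have "h (el c k) = pe c k" unfolding el_def by (rule f_the_inv_into_f_bij_betw[OF hb m])
  then show "ci (el c k) = c" "mp (el c k) = k" by (auto simp: ci_def mp_def)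
qed

lemma el_inj: "c \<le> n \<Longrightarrow> el c k = el c k' \<Longrightarrow> k = k'"
  using el_props by metis

lemma copy_inf: "c \<le> n \<Longrightarrow> infinite {x\<in>D. ci x = c}"
proof
  assume c: "c \<le> n" and f: "finite {x\<in>D. ci x = c}"
  have "range (el c) \<subseteq> {x\<in>D. ci x = c}" using el_props[OF c] by auto
  moreover have "inj (el c)" using el_inj[OF c] by (auto simp: inj_on_def)
  ultimately have "finite (UNIV :: nat set)" using f by (meson finite_imageD finite_subset)
  then show False by simp
qed

lemma copy_fin: "finite {y\<in>D. ci y = c \<and> mp y < m}"
proof (cases "c \<le> n")
  case True
  have "{y\<in>D. ci y = c \<and> mp y < m} \<subseteq> el c ` {..<m}"
  proof
    fix y assume y: "y \<in> {y\<in>D. ci y = c \<and> mp y < m}"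
    then have "y = el c (mp y)" using el_eq[of y "el c (mp y)"] el_props[OF True] by auto
    then show "y \<in> el c ` {..<m}" using y by auto
  qed
  then show ?thesis by (rule finite_subset) simp
next
  case False
  then have e: "{y\<in>D. ci y = c \<and> mp y < m} = {}" using ci_le by force
  show ?thesis by (subst e) simp
qed

lemma linA: "lin A"
  unfolding lin_def using R_iff el_eq
  by (smt (verit, best) less_trans nat_neq_iff)

lemma above_unb: "x \<in> D \<Longrightarrow> \<exists>z\<in>D. R x z \<and> y < z"
proof -
  assume x: "x \<in> D"
  let ?S = "{z\<in>D. ci z = ci x} - {z\<in>D. ci z = ci x \<and> mp z < Suc (mp x)}"
  have "infinite ?S" using copy_inf[OF ci_le[OF x]] copy_fin by (simp add: Diff_infinite_finite)
  then obtain z where "z \<in> ?S" "y < z" using unb by blast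
  then show ?thesis using R_iff[OF x, of z] by auto
qed

lemma below_unb: "x \<in> D \<Longrightarrow> 1 \<le> ci x \<Longrightarrow> \<exists>z\<in>D. R z x \<and> y < z"
proof -
  assume x: "x \<in> D" "1 \<le> ci x"
  have "infinite {z\<in>D. ci z = 0}" using copy_inf by simp
  then obtain z where "z \<in> {z\<in>D. ci z = 0}" "y < z" using unb by blast
  then show ?thesis using R_iff[OF _ x(1), of z] x(2) by auto
qed

lemma below_fin: "x \<in> D \<Longrightarrow> ci x = 0 \<Longrightarrow> finite {z\<in>D. R z x}"
proof -
  assume x: "x \<in> D" "ci x = 0"
  have "{z\<in>D. R z x} \<subseteq> {y\<in>D. ci y = 0 \<and> mp y < mp x}" using R_iff[OF _ x(1)] x(2) by auto
  then show ?thesis using copy_fin finite_subset by blast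
qed

lemma cnd_pos: "x \<in> D \<Longrightarrow> 1 \<le> ci x \<Longrightarrow> cnd A x y \<longleftrightarrow> y \<in> D \<and> y \<noteq> x"
proof -
  assume x: "x \<in> D" "1 \<le> ci x"
  note l = linD[OF linA]
  show ?thesis
  proof
    assume "cnd A x y"
    then show "y \<in> D \<and> y \<noteq> x" unfolding cnd_def using l(1)[OF x(1)] by auto
  next
    assume y: "y \<in> D \<and> y \<noteq> x"
    then have "R x y \<or> R y x" using l(3)[OF x(1)] by blast
    then show "cnd A x y"
    proof
      assume "R x y"
      moreover obtain z where "z \<in> D" "R z x" "y < z" using below_unb[OF x] by blast
      ultimately show ?thesis unfolding cnd_def using x y by blast
    next
      assume "R y x"
      moreover obtain z where "z \<in> D" "R x z" "y < z" using above_unb[OF x(1)] by blast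
      ultimately show ?thesis unfolding cnd_def using x y by blast
    qed
  qed
qed

lemma cnd_zero_fin: "x \<in> D \<Longrightarrow> ci x = 0 \<Longrightarrow> finite {y. cnd A x y}"
proof -
  assume x: "x \<in> D" "ci x = 0"
  let ?B = "{z\<in>D. R z x}"
  have fB: "finite ?B" by (rule below_fin[OF x])
  have "{y. cnd A x y} \<subseteq> ?B \<union> (\<Union>z\<in>?B. {..<z})"
    unfolding cnd_def by auto
  moreover have "finite (?B \<union> (\<Union>z\<in>?B. {..<z}))" using fB by auto
  ultimately show ?thesis by (rule finite_subset)
qed

lemma cnd_zero_ex: "x \<in> D \<Longrightarrow> ci x = 0 \<Longrightarrow> 1 \<le> mp x \<Longrightarrow> cnd A x (el 0 0)"
proof -
  assume x: "x \<in> D" "ci x = 0" "1 \<le> mp x"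
  note e = el_props[of 0 0, simplified]
  have "R (el 0 0) x" using R_iff[OF e(1) x(1)] e x by simp
  moreover obtain z where "z \<in> D" "R x z" "el 0 0 < z" using above_unb[OF x(1)] by blast
  ultimately show ?thesis unfolding cnd_def using x(1) e(1) by blast
qed

end


lemma lin_omega: "lin omega_lo"
  unfolding lin_def omega_lo_def by auto

lemma lin_omega2: "lin omega2_lo"
  unfolding lin_def omega2_lo_def
  apply (auto split: prod.splits)
  by (metis linorder_neqE_nat prod_decode_inverse)

lemma lin_times: assumes "lin L" shows "lin (times_lo L m)"
proof -
  note l = linD[OF assms]
  have mem: "a \<in> fst (times_lo L m) \<longleftrightarrow> fst (pd a) < m \<and> snd (pd a) \<in> fst L" for a
    by (auto simp: W_dom) (metis prod.collapse prod_decode_inverse)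
  show ?thesis unfolding lin_def
  proof (intro conjI ballI impI)
    fix x assume "x \<in> fst (times_lo L m)"
    then show "\<not> snd (times_lo L m) x x" using l(1) mem by (simp add: W_ord)
  next
    fix x y z assume xyz: "x \<in> fst (times_lo L m)" "y \<in> fst (times_lo L m)" "z \<in> fst (times_lo L m)"
      and a: "snd (times_lo L m) x y" "snd (times_lo L m) y z"
    have q: "snd (pd x) \<in> fst L" "snd (pd y) \<in> fst L" "snd (pd z) \<in> fst L" using xyz mem by auto
    show "snd (times_lo L m) x z"
      using a l(2)[OF q] by (auto simp: W_ord)
  next
    fix x y assume xy: "x \<in> fst (times_lo L m)" "y \<in> fst (times_lo L m)" "x \<noteq> y"
    have q: "snd (pd x) \<in> fst L" "snd (pd y) \<in> fst L" using xy mem by auto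
    have "pd x \<noteq> pd y" using xy(3) by simp
    then have d: "fst (pd x) \<noteq> fst (pd y) \<or> snd (pd x) \<noteq> snd (pd y)" by (simp add: prod_eq_iff)
    show "snd (times_lo L m) x y \<or> snd (times_lo L m) y x"
    proof (cases "fst (pd x) = fst (pd y)")
      case True
      then have "snd (pd x) \<noteq> snd (pd y)" using d by auto
      then show ?thesis using True l(3)[OF q] by (auto simp: W_ord)
    next
      case False
      then show ?thesis by (auto simp: W_ord)
    qed
  qed
qed

lemma lin_outS: assumes "lin A" shows "lin (outS A)"
proof -
  note l = linD[OF assms]
  have mem: "a \<in> fst (outS A) \<Longrightarrow> fst (pd a) \<in> fst A \<and> snd (pd a) \<in> fst A" for a by (rule outS_mem)
  have ord: "snd (outS A) a b = (snd A (fst (pd a)) (fst (pd b)) \<or> (fst (pd a) = fst (pd b) \<and> snd A (snd (pd a)) (snd (pd b))))" for a b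
    by (simp add: outS_def)
  show ?thesis unfolding lin_def
  proof (intro conjI ballI impI)
    fix x assume "x \<in> fst (outS A)"
    then show "\<not> snd (outS A) x x" using l(1) mem ord by auto
  next
    fix x y z assume xyz: "x \<in> fst (outS A)" "y \<in> fst (outS A)" "z \<in> fst (outS A)"
      and a: "snd (outS A) x y" "snd (outS A) y z"
    have q: "fst (pd x) \<in> fst A" "fst (pd y) \<in> fst A" "fst (pd z) \<in> fst A"
       "snd (pd x) \<in> fst A" "snd (pd y) \<in> fst A" "snd (pd z) \<in> fst A" using xyz mem by auto
    show "snd (outS A) x z"
      using a l(2)[OF q(1-3)] l(2)[OF q(4-6)] unfolding ord by auto
  next
    fix x y assume xy: "x \<in> fst (outS A)" "y \<in> fst (outS A)" "x \<noteq> y"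
    have q: "fst (pd x) \<in> fst A" "fst (pd y) \<in> fst A" "snd (pd x) \<in> fst A" "snd (pd y) \<in> fst A"
      using xy mem by auto
    have "pd x \<noteq> pd y" using xy(3) by simp
    then have d: "fst (pd x) \<noteq> fst (pd y) \<or> snd (pd x) \<noteq> snd (pd y)" by (simp add: prod_eq_iff)
    show "snd (outS A) x y \<or> snd (outS A) y x"
    proof (cases "fst (pd x) = fst (pd y)")
      case True
      then have "snd (pd x) \<noteq> snd (pd y)" using d by auto
      then show ?thesis using True l(3)[OF q(3,4)] unfolding ord by auto
    next
      case False
      then show ?thesis using l(3)[OF q(1,2)] unfolding ord by auto
    qed
  qed
qed

lemma range_inj_inf: "inj (f::nat \<Rightarrow> 'a) \<Longrightarrow> infinite (range f)"
  using finite_imageD infinite_UNIV_nat by blast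

definition Nn :: "nat \<Rightarrow> lstr" where "Nn n = ({..<n}, (<))"

lemma lin_Nn: "lin (Nn n)" unfolding lin_def Nn_def by auto

lemma W2_can: "0 < n \<Longrightarrow> iso (times_lo omega_lo n) (can (Nn n))"
proof (rule fiber_iso[where \<pi>="\<lambda>a. fst (pd a)"])
  assume n: "0 < n"
  show "lin (times_lo omega_lo n)" by (rule lin_times[OF lin_omega])
  show "lin (Nn n)" by (rule lin_Nn)
  show "(\<lambda>a. fst (pd a)) ` fst (times_lo omega_lo n) = fst (Nn n)"
  proof
    show "(\<lambda>a. fst (pd a)) ` fst (times_lo omega_lo n) \<subseteq> fst (Nn n)" by (auto simp: W_dom Nn_def)
    show "fst (Nn n) \<subseteq> (\<lambda>a. fst (pd a)) ` fst (times_lo omega_lo n)"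
    proof
      fix i assume "i \<in> fst (Nn n)"
      then have "pe i 0 \<in> fst (times_lo omega_lo n)" by (auto simp: W_dom Nn_def omega_lo_def)
      then show "i \<in> (\<lambda>a. fst (pd a)) ` fst (times_lo omega_lo n)" by (intro image_eqI[where x="pe i 0"]) auto
    qed
  qed
  show "snd (times_lo omega_lo n) p q" if "snd (Nn n) (fst (pd p)) (fst (pd q))" for p q
    using that by (simp add: W_ord Nn_def)
  fix e assume e: "e \<in> fst (Nn n)"
  let ?F = "{p \<in> fst (times_lo omega_lo n). fst (pd p) = e}"
  have F: "?F = range (\<lambda>x. pe e x)" using e by (auto simp: W_dom Nn_def omega_lo_def)
  show "wl ?F (snd (times_lo omega_lo n))"
    unfolding wl_def
  proof
    show "infinite ?F" unfolding F by (rule range_inj_inf) (auto simp: inj_on_def)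
    show "\<forall>x\<in>?F. finite {y\<in>?F. snd (times_lo omega_lo n) y x}"
    proof
      fix x assume "x \<in> ?F"
      then obtain k where k: "x = pe e k" unfolding F by blast
      have "{y\<in>?F. snd (times_lo omega_lo n) y x} \<subseteq> (\<lambda>j. pe e j) ` {..<k}"
        unfolding F k by (auto simp: W_ord omega_lo_def)
      then show "finite {y\<in>?F. snd (times_lo omega_lo n) y x}" by (rule finite_subset) simp
    qed
  qed
qed

lemma T_can: "0 < n \<Longrightarrow> iso (times_lo omega2_lo n) (can (times_lo omega_lo n))"
proof (rule fiber_iso[where \<pi>="\<lambda>a. pe (fst (pd a)) (fst (pd (snd (pd a))))"])
  assume n: "0 < n"
  show "lin (times_lo omega2_lo n)" by (rule lin_times[OF lin_omega2])
  show "lin (times_lo omega_lo n)" by (rule lin_times[OF lin_omega])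
  show "(\<lambda>a. pe (fst (pd a)) (fst (pd (snd (pd a))))) ` fst (times_lo omega2_lo n) = fst (times_lo omega_lo n)"
  proof
    show "(\<lambda>a. pe (fst (pd a)) (fst (pd (snd (pd a))))) ` fst (times_lo omega2_lo n) \<subseteq> fst (times_lo omega_lo n)"
      by (auto simp: W_dom omega_lo_def omega2_lo_def)
    show "fst (times_lo omega_lo n) \<subseteq> (\<lambda>a. pe (fst (pd a)) (fst (pd (snd (pd a))))) ` fst (times_lo omega2_lo n)"
    proof
      fix b assume "b \<in> fst (times_lo omega_lo n)"
      then obtain i j where b: "b = pe i j" "i < n" by (auto simp: W_dom)
      then have "pe i (pe j 0) \<in> fst (times_lo omega2_lo n)" by (auto simp: W_dom omega2_lo_def)
      then show "b \<in> (\<lambda>a. pe (fst (pd a)) (fst (pd (snd (pd a))))) ` fst (times_lo omega2_lo n)"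
        using b by (intro image_eqI[where x="pe i (pe j 0)"]) auto
    qed
  qed
  show "snd (times_lo omega2_lo n) p q"
    if "snd (times_lo omega_lo n) (pe (fst (pd p)) (fst (pd (snd (pd p))))) (pe (fst (pd q)) (fst (pd (snd (pd q)))))" for p q
    using that by (auto simp: W_ord omega_lo_def omega2_lo_def split: prod.splits)
  fix e assume e: "e \<in> fst (times_lo omega_lo n)"
  then obtain i j where ij: "e = pe i j" "i < n" by (auto simp: W_dom)
  let ?F = "{p \<in> fst (times_lo omega2_lo n). pe (fst (pd p)) (fst (pd (snd (pd p)))) = e}"
  have F: "?F = range (\<lambda>x. pe i (pe j x))"
  proof
    show "?F \<subseteq> range (\<lambda>x. pe i (pe j x))"
    proof
      fix p assume "p \<in> ?F"
      then have "fst (pd p) = i" "fst (pd (snd (pd p))) = j" using ij by auto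
      then have "p = pe i (pe j (snd (pd (snd (pd p)))))" by (metis prod.collapse prod_decode_inverse)
      then show "p \<in> range (\<lambda>x. pe i (pe j x))" by blast
    qed
    show "range (\<lambda>x. pe i (pe j x)) \<subseteq> ?F" using ij by (auto simp: W_dom omega2_lo_def)
  qed
  show "wl ?F (snd (times_lo omega2_lo n))"
    unfolding wl_def
  proof
    show "infinite ?F" unfolding F by (rule range_inj_inf) (auto simp: inj_on_def)
    show "\<forall>x\<in>?F. finite {y\<in>?F. snd (times_lo omega2_lo n) y x}"
    proof
      fix x assume "x \<in> ?F"
      then obtain k where k: "x = pe i (pe j k)" unfolding F by blast
      have "{y\<in>?F. snd (times_lo omega2_lo n) y x} \<subseteq> (\<lambda>l. pe i (pe j l)) ` {..<k}"
        unfolding F k by (auto simp: W_ord omega2_lo_def)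
      then show "finite {y\<in>?F. snd (times_lo omega2_lo n) y x}" by (rule finite_subset) simp
    qed
  qed
qed


lemma out_iff: "a \<in> fst (outS A) \<longleftrightarrow> cnd A (fst (pd a)) (snd (pd a))"
  by (auto simp: outS_def) (metis prod.collapse prod_decode_inverse)

lemma Rout: "snd (outS A) a b = (snd A (fst (pd a)) (fst (pd b)) \<or> (fst (pd a) = fst (pd b) \<and> snd A (snd (pd a)) (snd (pd b))))"
  by (simp add: outS_def)

lemma cnd_mem: "cnd A x y \<Longrightarrow> x \<in> fst A \<and> y \<in> fst A" by (simp add: cnd_def)

locale omA2 = omA +
  assumes npos: "0 < n"
begin

definition po :: "nat \<Rightarrow> nat" where
  "po a = (if ci (fst (pd a)) = 0 then 0 else Suc (pe (fst (pd a)) (ci (snd (pd a)))))"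

definition EQ :: "nat set" where
  "EQ = {a. a = 0 \<or> (a \<noteq> 0 \<and> fst (pd (a-1)) \<in> D \<and> 1 \<le> ci (fst (pd (a-1))) \<and> snd (pd (a-1)) \<le> n)}"

definition SQ :: "nat \<Rightarrow> nat \<Rightarrow> bool" where
  "SQ a b = ((a = 0 \<and> b \<noteq> 0) \<or> (a \<noteq> 0 \<and> b \<noteq> 0 \<and> (R (fst (pd (a-1))) (fst (pd (b-1))) \<or>
      (fst (pd (a-1)) = fst (pd (b-1)) \<and> snd (pd (a-1)) < snd (pd (b-1))))))"

definition "QQ = (EQ, SQ)"

lemma lin_QQ: "lin QQ"
proof -
  note l = linD[OF linA]
  show ?thesis unfolding lin_def QQ_def fst_conv snd_conv
  proof (intro conjI ballI impI)
    fix x assume "x \<in> EQ" then show "\<not> SQ x x" using l(1) by (auto simp: SQ_def EQ_def)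
  next
    fix x y z assume xyz: "x \<in> EQ" "y \<in> EQ" "z \<in> EQ" and a: "SQ x y" "SQ y z"
    show "SQ x z"
    proof (cases "x = 0")
      case True then show ?thesis using a by (auto simp: SQ_def)
    next
      case False
      then have nz: "y \<noteq> 0" "z \<noteq> 0" using a by (auto simp: SQ_def)
      have m: "fst (pd (x-1)) \<in> D" "fst (pd (y-1)) \<in> D" "fst (pd (z-1)) \<in> D"
        using xyz False nz by (auto simp: EQ_def)
      show ?thesis using a False nz l(2)[OF m] unfolding SQ_def by auto
    qed
  next
    fix x y assume xy: "x \<in> EQ" "y \<in> EQ" "x \<noteq> y"
    show "SQ x y \<or> SQ y x"
    proof (cases "x = 0 \<or> y = 0")
      case True then show ?thesis using xy(3) by (auto simp: SQ_def)
    next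
      case False
      then have m: "fst (pd (x-1)) \<in> D" "fst (pd (y-1)) \<in> D" using xy by (auto simp: EQ_def)
      have "x - 1 \<noteq> y - 1" using False xy(3) by auto
      then have "pd (x-1) \<noteq> pd (y-1)" by simp
      then have d: "fst (pd (x-1)) \<noteq> fst (pd (y-1)) \<or> snd (pd (x-1)) \<noteq> snd (pd (y-1))" by (simp add: prod_eq_iff)
      show ?thesis
      proof (cases "fst (pd (x-1)) = fst (pd (y-1))")
        case True
        then have "snd (pd (x-1)) < snd (pd (y-1)) \<or> snd (pd (y-1)) < snd (pd (x-1))" using d by auto
        then show ?thesis using True False unfolding SQ_def by auto
      next
        case F2: False
        then show ?thesis using l(3)[OF m F2] False unfolding SQ_def by auto
      qed
    qed
  qed
qed

lemma po_image: "po ` fst (outS A) = EQ"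
proof
  show "po ` fst (outS A) \<subseteq> EQ"
  proof
    fix b assume "b \<in> po ` fst (outS A)"
    then obtain a where a: "a \<in> fst (outS A)" "b = po a" by blast
    then have c: "cnd A (fst (pd a)) (snd (pd a))" using out_iff by blast
    then have m: "fst (pd a) \<in> D" "snd (pd a) \<in> D" using cnd_mem by auto
    show "b \<in> EQ"
    proof (cases "ci (fst (pd a)) = 0")
      case True then show ?thesis using a by (simp add: po_def EQ_def)
    next
      case False then show ?thesis using a m ci_le[OF m(2)] by (simp add: po_def EQ_def)
    qed
  qed
  show "EQ \<subseteq> po ` fst (outS A)"
  proof
    fix b assume b: "b \<in> EQ"
    show "b \<in> po ` fst (outS A)"
    proof (cases "b = 0")
      case True
      have e: "ci (el 0 (Suc 0)) = 0" "mp (el 0 (Suc 0)) = 1" "el 0 (Suc 0) \<in> D" using el_props[of 0 "Suc 0"] by auto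
      have "cnd A (el 0 (Suc 0)) (el 0 0)" by (rule cnd_zero_ex[OF e(3) e(1)]) (simp add: e(2))
      then have "pe (el 0 (Suc 0)) (el 0 0) \<in> fst (outS A)" using out_iff by simp
      moreover have "po (pe (el 0 (Suc 0)) (el 0 0)) = 0" using e by (simp add: po_def)
      ultimately show ?thesis using True by (metis image_eqI)
    next
      case False
      let ?x = "fst (pd (b-1))" and ?c = "snd (pd (b-1))"
      have m: "?x \<in> D" "1 \<le> ci ?x" "?c \<le> n" using b False by (auto simp: EQ_def)
      have "infinite ({y\<in>D. ci y = ?c} - {?x})" using copy_inf[OF m(3)] by simp
      then have "({y\<in>D. ci y = ?c} - {?x}) \<noteq> {}" by (metis finite.emptyI)
      then obtain y where y: "y \<in> D" "ci y = ?c" "y \<noteq> ?x" by blast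
      have "cnd A ?x y" using cnd_pos[OF m(1) m(2)] y by simp
      then have "pe ?x y \<in> fst (outS A)" using out_iff by simp
      moreover have "po (pe ?x y) = b"
      proof -
        have "po (pe ?x y) = Suc (pe ?x ?c)" using m(2) y(2) by (simp add: po_def)
        also have "pe ?x ?c = b - 1" by simp
        finally show ?thesis using False by simp
      qed
      ultimately show ?thesis by (metis image_eqI)
    qed
  qed
qed

lemma po_nz: "po a \<noteq> 0 \<longleftrightarrow> ci (fst (pd a)) \<noteq> 0"
  by (simp add: po_def)

lemma po_Suc: "ci (fst (pd a)) \<noteq> 0 \<Longrightarrow> po a - 1 = pe (fst (pd a)) (ci (snd (pd a)))"
  by (simp add: po_def)

lemma po_mono: "a \<in> fst (outS A) \<Longrightarrow> b \<in> fst (outS A) \<Longrightarrow> SQ (po a) (po b) \<Longrightarrow> snd (outS A) a b"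
proof -
  assume a: "a \<in> fst (outS A)" and b: "b \<in> fst (outS A)" and s: "SQ (po a) (po b)"
  have ma: "fst (pd a) \<in> D" "snd (pd a) \<in> D" using cnd_mem[OF iffD1[OF out_iff a]] by auto
  have mb: "fst (pd b) \<in> D" "snd (pd b) \<in> D" using cnd_mem[OF iffD1[OF out_iff b]] by auto
  have pb: "po b \<noteq> 0" using s by (auto simp: SQ_def)
  then have nb: "ci (fst (pd b)) \<noteq> 0" using po_nz by blast
  show ?thesis
  proof (cases "ci (fst (pd a)) = 0")
    case True
    then have "R (fst (pd a)) (fst (pd b))" using R_iff[OF ma(1) mb(1)] nb by simp
    then show ?thesis by (simp add: Rout)
  next
    case False
    have pa: "po a \<noteq> 0" using False po_nz by blast
    have "R (fst (pd (po a - 1))) (fst (pd (po b - 1))) \<or> (fst (pd (po a - 1)) = fst (pd (po b - 1)) \<and> snd (pd (po a - 1)) < snd (pd (po b - 1)))"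
      using s pa pb by (simp add: SQ_def)
    then have "R (fst (pd a)) (fst (pd b)) \<or> (fst (pd a) = fst (pd b) \<and> ci (snd (pd a)) < ci (snd (pd b)))"
      using po_Suc[OF False] po_Suc[OF nb] by simp
    then show ?thesis
    proof
      assume "R (fst (pd a)) (fst (pd b))" then show ?thesis by (simp add: Rout)
    next
      assume "fst (pd a) = fst (pd b) \<and> ci (snd (pd a)) < ci (snd (pd b))"
      then show ?thesis using R_iff[OF ma(2) mb(2)] by (simp add: Rout)
    qed
  qed
qed

lemma fib0_wl: "wl {p\<in>fst (outS A). po p = 0} (snd (outS A))"
  unfolding wl_def
proof
  let ?F = "{p\<in>fst (outS A). po p = 0}"
  have F: "?F = {p\<in>fst (outS A). ci (fst (pd p)) = 0}" by (auto simp: po_def)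
  show "infinite ?F"
  proof -
    let ?f = "\<lambda>k. pe (el 0 (Suc k)) (el 0 0)"
    have "range ?f \<subseteq> ?F"
    proof
      fix a assume "a \<in> range ?f"
      then obtain k where k: "a = ?f k" by blast
      have e: "ci (el 0 (Suc k)) = 0" "mp (el 0 (Suc k)) = Suc k" "el 0 (Suc k) \<in> D" using el_props[of 0 "Suc k"] by auto
      have "cnd A (el 0 (Suc k)) (el 0 0)" by (rule cnd_zero_ex[OF e(3) e(1)]) (simp add: e(2))
      then show "a \<in> ?F" unfolding F k using out_iff e by simp
    qed
    moreover have "inj ?f" using el_inj[of 0] by (auto simp: inj_on_def)
    ultimately show ?thesis using infinite_super range_inj_inf by blast
  qed
  show "\<forall>x\<in>?F. finite {y\<in>?F. snd (outS A) y x}"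
  proof
    fix a assume a: "a \<in> ?F"
    let ?x = "fst (pd a)"
    have a1: "a \<in> fst (outS A)" "po a = 0" using a by simp_all
    have ca: "ci ?x = 0" using a1(2) po_nz by blast
    have ax: "?x \<in> D" using cnd_mem[OF iffD1[OF out_iff a1(1)]] by blast
    let ?X = "{x'\<in>D. ci x' = 0 \<and> mp x' < Suc (mp ?x)}"
    have fX: "finite ?X" by (rule copy_fin)
    let ?S = "Sigma ?X (\<lambda>x'. {y. cnd A x' y})"
    have fS: "finite ?S"
    proof (rule finite_SigmaI[OF fX])
      fix x' assume "x' \<in> ?X" then show "finite {y. cnd A x' y}" by (intro cnd_zero_fin) simp_all
    qed
    have sub: "{y\<in>?F. snd (outS A) y a} \<subseteq> (\<lambda>(u, v). pe u v) ` ?S"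
    proof
      fix b assume b: "b \<in> {y\<in>?F. snd (outS A) y a}"
      then have b1: "b \<in> fst (outS A)" "po b = 0" "snd (outS A) b a" by simp_all
      have c: "cnd A (fst (pd b)) (snd (pd b))" using iffD1[OF out_iff b1(1)] .
      have cb: "ci (fst (pd b)) = 0" using b1(2) po_nz by blast
      have mb: "fst (pd b) \<in> D" using cnd_mem[OF c] by blast
      have "R (fst (pd b)) ?x \<or> fst (pd b) = ?x" using b1(3) unfolding Rout by blast
      then have "mp (fst (pd b)) < Suc (mp ?x)"
      proof
        assume "R (fst (pd b)) ?x"
        then have "mp (fst (pd b)) < mp ?x" using R_iff[OF mb ax] cb ca by simp
        then show ?thesis by simp
      qed simp
      then have "(fst (pd b), snd (pd b)) \<in> ?S" using c mb cb by (intro SigmaI) simp_all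
      then have "pd b \<in> ?S" by simp
      moreover have "b = (\<lambda>(u, v). pe u v) (pd b)" by (simp add: case_prod_beta)
      ultimately show "b \<in> (\<lambda>(u, v). pe u v) ` ?S" by (rule rev_image_eqI)
    qed
    show "finite {y\<in>?F. snd (outS A) y a}" by (rule finite_subset[OF sub finite_imageI[OF fS]])
  qed
qed

lemma fibS_wl:
  assumes x: "x \<in> D" "1 \<le> ci x" and c: "c \<le> n"
  shows "wl {p\<in>fst (outS A). po p = Suc (pe x c)} (snd (outS A))"
  unfolding wl_def
proof
  let ?F = "{p\<in>fst (outS A). po p = Suc (pe x c)}"
  have F: "?F = (\<lambda>y. pe x y) ` ({y\<in>D. ci y = c} - {x})"
  proof
    show "?F \<subseteq> (\<lambda>y. pe x y) ` ({y\<in>D. ci y = c} - {x})"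
    proof
      fix a assume a: "a \<in> ?F"
      then have nz: "ci (fst (pd a)) \<noteq> 0" by (auto simp: po_def split: if_splits)
      then have "pe (fst (pd a)) (ci (snd (pd a))) = pe x c" using a by (simp add: po_def)
      then have e: "fst (pd a) = x" "ci (snd (pd a)) = c" by auto
      have "a \<in> fst (outS A)" using a by simp
      then have "cnd A x (snd (pd a))" using e(1) out_iff by metis
      then have "snd (pd a) \<in> D" "snd (pd a) \<noteq> x" using cnd_pos[OF x] by auto
      moreover have "a = pe x (snd (pd a))" using e by (metis prod.collapse prod_decode_inverse)
      ultimately show "a \<in> (\<lambda>y. pe x y) ` ({y\<in>D. ci y = c} - {x})" using e(2) by blast
    qed
    show "(\<lambda>y. pe x y) ` ({y\<in>D. ci y = c} - {x}) \<subseteq> ?F"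
    proof
      fix a assume "a \<in> (\<lambda>y. pe x y) ` ({y\<in>D. ci y = c} - {x})"
      then obtain y where y: "a = pe x y" "y \<in> D" "ci y = c" "y \<noteq> x" by blast
      have "cnd A x y" using cnd_pos[OF x] y by simp
      then show "a \<in> ?F" using y out_iff x(2) by (simp add: po_def)
    qed
  qed
  show "infinite ?F"
  proof
    assume "finite ?F"
    then have "finite ({y\<in>D. ci y = c} - {x})" unfolding F by (rule finite_imageD) (auto simp: inj_on_def)
    then show False using copy_inf[OF c] by simp
  qed
  show "\<forall>a\<in>?F. finite {b\<in>?F. snd (outS A) b a}"
  proof
    fix a assume "a \<in> ?F"
    then obtain y where y: "a = pe x y" "y \<in> D" "ci y = c" "y \<noteq> x" unfolding F by blast
    have "{b\<in>?F. snd (outS A) b a} \<subseteq> (\<lambda>y. pe x y) ` {y'\<in>D. ci y' = c \<and> mp y' < mp y}"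
    proof
      fix b assume "b \<in> {b\<in>?F. snd (outS A) b a}"
      then obtain y' where y': "b = pe x y'" "y' \<in> D" "ci y' = c" "snd (outS A) b a" unfolding F by blast
      then have "R y' y" using linD(1)[OF linA x(1)] by (simp add: Rout y(1))
      then have "mp y' < mp y" using R_iff[OF y'(2) y(2)] y'(3) y(3) by simp
      then show "b \<in> (\<lambda>y. pe x y) ` {y'\<in>D. ci y' = c \<and> mp y' < mp y}" using y' by blast
    qed
    then show "finite {b\<in>?F. snd (outS A) b a}" using copy_fin finite_subset by blast
  qed
qed

lemma out_can: "iso (outS A) (can QQ)"
proof (rule fiber_iso[where \<pi>=po])
  show "lin (outS A)" by (rule lin_outS[OF linA])
  show "lin QQ" by (rule lin_QQ)
  show "po ` fst (outS A) = fst QQ" using po_image by (simp add: QQ_def)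
  show "snd (outS A) p q" if "p \<in> fst (outS A)" "q \<in> fst (outS A)" "snd QQ (po p) (po q)" for p q
    using po_mono that by (simp add: QQ_def)
  fix e assume "e \<in> fst QQ"
  then have e: "e \<in> EQ" by (simp add: QQ_def)
  show "wl {p \<in> fst (outS A). po p = e} (snd (outS A))"
  proof (cases "e = 0")
    case True then show ?thesis using fib0_wl by simp
  next
    case False
    have m: "fst (pd (e-1)) \<in> D" "1 \<le> ci (fst (pd (e-1)))" "snd (pd (e-1)) \<le> n" using e False by (auto simp: EQ_def)
    have "e = Suc (pe (fst (pd (e-1))) (snd (pd (e-1))))" using False by simp
    then show ?thesis using fibS_wl[OF m(1) m(2) m(3)] by simp
  qed
qed

end


context omA2
begin

definition p2 :: "nat \<Rightarrow> nat" where
  "p2 a = (if a = 0 then 0 else ci (fst (pd (a-1))) - 1)"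

lemma QQ_can: "iso QQ (can (Nn n))"
proof (rule fiber_iso[where \<pi>=p2])
  show "lin QQ" by (rule lin_QQ)
  show "lin (Nn n)" by (rule lin_Nn)
  show "p2 ` fst QQ = fst (Nn n)"
  proof
    show "p2 ` fst QQ \<subseteq> fst (Nn n)"
    proof
      fix b assume "b \<in> p2 ` fst QQ"
      then obtain a where a: "a \<in> EQ" "b = p2 a" by (auto simp: QQ_def)
      show "b \<in> fst (Nn n)"
      proof (cases "a = 0")
        case True then show ?thesis using a npos by (simp add: p2_def Nn_def)
      next
        case False
        then have "fst (pd (a-1)) \<in> D" "1 \<le> ci (fst (pd (a-1)))" using a by (auto simp: EQ_def)
        then show ?thesis using a False ci_le[OF \<open>fst (pd (a-1)) \<in> D\<close>] by (auto simp: p2_def Nn_def)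
      qed
    qed
    show "fst (Nn n) \<subseteq> p2 ` fst QQ"
    proof
      fix i assume "i \<in> fst (Nn n)"
      then have i: "Suc i \<le> n" by (simp add: Nn_def)
      note e = el_props[OF i, of 0]
      let ?a = "Suc (pe (el (Suc i) 0) 0)"
      have "?a \<in> EQ" using e by (simp add: EQ_def)
      moreover have "p2 ?a = i" using e by (simp add: p2_def)
      ultimately show "i \<in> p2 ` fst QQ" by (metis QQ_def fst_conv image_eqI)
    qed
  qed
  show "snd QQ p q" if "p \<in> fst QQ" "q \<in> fst QQ" "snd (Nn n) (p2 p) (p2 q)" for p q
  proof -
    have pq: "p \<in> EQ" "q \<in> EQ" "p2 p < p2 q" using that by (auto simp: QQ_def Nn_def)
    then have qn: "q \<noteq> 0" by (cases "q = 0") (simp_all add: p2_def)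
    show ?thesis
    proof (cases "p = 0")
      case True then show ?thesis using qn by (simp add: QQ_def SQ_def)
    next
      case False
      have mp': "fst (pd (p-1)) \<in> D" "1 \<le> ci (fst (pd (p-1)))" using pq(1) False by (auto simp: EQ_def)
      have mq: "fst (pd (q-1)) \<in> D" "1 \<le> ci (fst (pd (q-1)))" using pq(2) qn by (auto simp: EQ_def)
      have "ci (fst (pd (p-1))) < ci (fst (pd (q-1)))" using pq(3) False qn mp'(2) mq(2) by (simp add: p2_def)
      then have "R (fst (pd (p-1))) (fst (pd (q-1)))" using R_iff[OF mp'(1) mq(1)] by simp
      then show ?thesis using False qn by (simp add: QQ_def SQ_def)
    qed
  qed
  fix e assume "e \<in> fst (Nn n)"
  then have en: "Suc e \<le> n" by (simp add: Nn_def)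
  let ?F = "{p \<in> fst QQ. p2 p = e}"
  show "wl ?F (snd QQ)"
    unfolding wl_def
  proof
    let ?f = "\<lambda>k. Suc (pe (el (Suc e) k) 0)"
    have "range ?f \<subseteq> ?F"
    proof
      fix a assume "a \<in> range ?f"
      then obtain k where k: "a = ?f k" by blast
      note el = el_props[OF en, of k]
      show "a \<in> ?F" using el k by (simp add: QQ_def EQ_def p2_def)
    qed
    moreover have "inj ?f" using el_inj[OF en] by (auto simp: inj_on_def)
    ultimately show "infinite ?F" using infinite_super range_inj_inf by blast
    show "\<forall>x\<in>?F. finite {y\<in>?F. snd QQ y x}"
    proof
      fix a assume a: "a \<in> ?F"
      show "finite {y\<in>?F. snd QQ y a}"
      proof (cases "a = 0")
        case True
        then have e0: "{y\<in>?F. snd QQ y a} = {}" by (auto simp: QQ_def SQ_def)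
        show ?thesis by (subst e0) simp
      next
        case False
        let ?x = "fst (pd (a-1))"
        have ax: "?x \<in> D" "1 \<le> ci ?x" using a False by (auto simp: QQ_def EQ_def)
        let ?X = "{x'\<in>D. ci x' = ci ?x \<and> mp x' < Suc (mp ?x)}"
        have fin: "finite ({0} \<union> (\<lambda>(u, c). Suc (pe u c)) ` (?X \<times> {..n}))"
          using copy_fin by auto
        have "{y\<in>?F. snd QQ y a} \<subseteq> {0} \<union> (\<lambda>(u, c). Suc (pe u c)) ` (?X \<times> {..n})"
        proof
          fix b assume b: "b \<in> {y\<in>?F. snd QQ y a}"
          show "b \<in> {0} \<union> (\<lambda>(u, c). Suc (pe u c)) ` (?X \<times> {..n})"
          proof (cases "b = 0")
            case True then show ?thesis by simp
          next
            case bn: False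
            let ?u = "fst (pd (b-1))" and ?c = "snd (pd (b-1))"
            have bm: "b \<in> EQ" "p2 b = e" "SQ b a" using b by (auto simp: QQ_def)
            have am: "p2 a = e" using a by simp
            have bu: "?u \<in> D" "1 \<le> ci ?u" "?c \<le> n" using bm(1) bn by (auto simp: EQ_def)
            have "ci ?u - 1 = ci ?x - 1" using bm(2) am bn False by (simp add: p2_def)
            then have cu: "ci ?u = ci ?x" using bu(2) ax(2) by simp
            have "R ?u ?x \<or> ?u = ?x" using bm(3) bn False by (auto simp: SQ_def)
            then have "mp ?u < Suc (mp ?x)" using R_iff[OF bu(1) ax(1)] cu by auto
            then have "(?u, ?c) \<in> ?X \<times> {..n}" using bu cu by (intro SigmaI) simp_all
            moreover have "b = (\<lambda>(u, c). Suc (pe u c)) (?u, ?c)" using bn by simp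
            ultimately show ?thesis by blast
          qed
        qed
        then show ?thesis using fin finite_subset by blast
      qed
    qed
  qed
qed

lemma out_T: "iso (outS A) (times_lo omega2_lo n)"
proof -
  have a: "iso (outS A) (can QQ)" by (rule out_can)
  have b: "iso QQ (times_lo omega_lo n)"
    using QQ_can iso_sym[OF W2_can[OF npos]] by (rule iso_trans)
  have c: "iso (can QQ) (can (times_lo omega_lo n))" by (rule can_iso[OF b])
  have d: "iso (can (times_lo omega_lo n)) (times_lo omega2_lo n)" by (rule iso_sym[OF T_can[OF npos]])
  show ?thesis using iso_trans[OF iso_trans[OF a c] d] .
qed

end

lemma main_pos:
  assumes "0 < n" "iso A (times_lo omega_lo (Suc n))"
  shows "iso (outS A) (times_lo omega2_lo n)"
proof -
  obtain h where h: "bij_betw h (fst A) (fst (times_lo omega_lo (Suc n)))"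
    "\<forall>x\<in>fst A. \<forall>y\<in>fst A. snd A x y \<longleftrightarrow> snd (times_lo omega_lo (Suc n)) (h x) (h y)"
    using assms(2) unfolding iso_def by blast
  interpret omA2 n A h
    by unfold_locales (use h assms(1) in auto)
  show ?thesis by (rule out_T)
qed

lemma iso_rev: "iso A B \<Longrightarrow> iso (rev_lo A) (rev_lo B)"
  unfolding iso_def rev_lo_def by auto

lemma rev_rev: "rev_lo (rev_lo L) = L"
  by (simp add: rev_lo_def)

lemma cnd_rev: "cnd (rev_lo A) x y = cnd A x y"
  unfolding cnd_def rev_lo_def by auto

lemma outS_rev: "outS (rev_lo A) = rev_lo (outS A)"
proof -
  have "fst (outS (rev_lo A)) = fst (rev_lo (outS A))" using cnd_rev by (simp add: outS_def rev_lo_def)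
  moreover have "snd (outS (rev_lo A)) = snd (rev_lo (outS A))" by (auto simp: outS_def rev_lo_def intro!: ext)
  ultimately show ?thesis by (simp add: prod_eq_iff)
qed

lemma rev_W: "iso (rev_lo (times_lo (rev_lo omega_lo) (Suc n))) (times_lo omega_lo (Suc n))"
proof -
  define g where "g a = pe (n - fst (pd a)) (snd (pd a))" for a
  have dom: "fst (times_lo L (Suc n)) = {pe i x | i x. i \<le> n \<and> x \<in> fst L}" for L
    by (auto simp: W_dom)
  have bij: "bij_betw g (fst (times_lo (rev_lo omega_lo) (Suc n))) (fst (times_lo omega_lo (Suc n)))"
  proof (rule bij_betw_byWitness[where f'=g])
    show "\<forall>a\<in>fst (times_lo (rev_lo omega_lo) (Suc n)). g (g a) = a" by (auto simp: dom g_def)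
    show "\<forall>a\<in>fst (times_lo omega_lo (Suc n)). g (g a) = a" by (auto simp: dom g_def)
    show "g ` fst (times_lo (rev_lo omega_lo) (Suc n)) \<subseteq> fst (times_lo omega_lo (Suc n))" by (auto simp: dom g_def rev_lo_def omega_lo_def)
    show "g ` fst (times_lo omega_lo (Suc n)) \<subseteq> fst (times_lo (rev_lo omega_lo) (Suc n))" by (auto simp: dom g_def rev_lo_def omega_lo_def)
  qed
  show ?thesis unfolding iso_def
  proof (intro exI conjI)
    show "bij_betw g (fst (rev_lo (times_lo (rev_lo omega_lo) (Suc n)))) (fst (times_lo omega_lo (Suc n)))"
      using bij by (simp add: rev_lo_def)
    show "\<forall>x\<in>fst (rev_lo (times_lo (rev_lo omega_lo) (Suc n))). \<forall>y\<in>fst (rev_lo (times_lo (rev_lo omega_lo) (Suc n))).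
      snd (rev_lo (times_lo (rev_lo omega_lo) (Suc n))) x y = snd (times_lo omega_lo (Suc n)) (g x) (g y)"
      by (auto simp: rev_lo_def dom W_ord g_def omega_lo_def)
  qed
qed

lemma rev_T: "iso (rev_lo (times_lo omega2_lo n)) (times_lo (rev_lo omega2_lo) n)"
proof -
  define g where "g a = pe (n - 1 - fst (pd a)) (snd (pd a))" for a
  have dom: "fst (times_lo L n) = {pe i x | i x. i < n \<and> x \<in> fst L}" for L
    by (auto simp: W_dom)
  have bij: "bij_betw g (fst (times_lo omega2_lo n)) (fst (times_lo (rev_lo omega2_lo) n))"
  proof (rule bij_betw_byWitness[where f'=g])
    show "\<forall>a\<in>fst (times_lo omega2_lo n). g (g a) = a" by (auto simp: dom g_def)
    show "\<forall>a\<in>fst (times_lo (rev_lo omega2_lo) n). g (g a) = a" by (auto simp: dom g_def)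
    show "g ` fst (times_lo omega2_lo n) \<subseteq> fst (times_lo (rev_lo omega2_lo) n)" by (auto simp: dom g_def rev_lo_def omega2_lo_def)
    show "g ` fst (times_lo (rev_lo omega2_lo) n) \<subseteq> fst (times_lo omega2_lo n)" by (auto simp: dom g_def rev_lo_def omega2_lo_def)
  qed
  show ?thesis unfolding iso_def
  proof (intro exI conjI)
    show "bij_betw g (fst (rev_lo (times_lo omega2_lo n))) (fst (times_lo (rev_lo omega2_lo) n))"
      using bij by (simp add: rev_lo_def)
    show "\<forall>x\<in>fst (rev_lo (times_lo omega2_lo n)). \<forall>y\<in>fst (rev_lo (times_lo omega2_lo n)).
      snd (rev_lo (times_lo omega2_lo n)) x y = snd (times_lo (rev_lo omega2_lo) n) (g x) (g y)"
      by (auto simp: rev_lo_def dom W_ord g_def)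
  qed
qed

lemma main_neg:
  assumes "0 < n" "iso A (times_lo (rev_lo omega_lo) (Suc n))"
  shows "iso (outS A) (times_lo (rev_lo omega2_lo) n)"
proof -
  have "iso (rev_lo A) (times_lo omega_lo (Suc n))"
    using iso_rev[OF assms(2)] rev_W by (rule iso_trans)
  then have "iso (outS (rev_lo A)) (times_lo omega2_lo n)" by (rule main_pos[OF assms(1)])
  then have "iso (rev_lo (outS A)) (times_lo omega2_lo n)" by (simp add: outS_rev)
  then have "iso (outS A) (rev_lo (times_lo omega2_lo n))" using iso_rev rev_rev by metis
  then show ?thesis using rev_T by (rule iso_trans)
qed


lemma diag_iso: assumes "diag A = diag B" shows "iso A B"
proof -
  have d: "fst A = fst B"
  proof
    show "fst A \<subseteq> fst B" using assms Eq_diag[of _ _ A] Eq_diag[of _ _ B] by blast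
    show "fst B \<subseteq> fst A" using assms Eq_diag[of _ _ A] Eq_diag[of _ _ B] by blast
  qed
  have o: "x \<in> fst A \<Longrightarrow> y \<in> fst A \<Longrightarrow> snd A x y \<longleftrightarrow> snd B x y" for x y
    using assms Lt_diag[of x y A] Lt_diag[of x y B] d by blast
  show ?thesis unfolding iso_def using d o by (intro exI[of _ id]) auto
qed

definition hasmin :: "lstr \<Rightarrow> bool" where
  "hasmin L \<longleftrightarrow> (\<exists>x\<in>fst L. \<forall>y\<in>fst L. y \<noteq> x \<longrightarrow> snd L x y)"

lemma hasmin_iso: assumes "iso A B" "hasmin B" shows "hasmin A"
proof -
  obtain h where h: "bij_betw h (fst A) (fst B)" "\<forall>x\<in>fst A. \<forall>y\<in>fst A. snd A x y \<longleftrightarrow> snd B (h x) (h y)"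
    using assms(1) unfolding iso_def by blast
  obtain m where m: "m \<in> fst B" "\<forall>y\<in>fst B. y \<noteq> m \<longrightarrow> snd B m y" using assms(2) unfolding hasmin_def by blast
  obtain x where x: "x \<in> fst A" "h x = m" using m(1) h(1) by (metis bij_betw_def imageE)
  have "\<forall>y\<in>fst A. y \<noteq> x \<longrightarrow> snd A x y"
  proof (intro ballI impI)
    fix y assume y: "y \<in> fst A" "y \<noteq> x"
    then have "h y \<noteq> m" using x h(1) by (metis bij_betw_imp_inj_on inj_onD)
    moreover have "h y \<in> fst B" using bij_betw_apply[OF h(1) y(1)] .
    ultimately have "snd B m (h y)" using m(2) by blast
    then show "snd A x y" using h(2) x y(1) by simp
  qed
  then show ?thesis unfolding hasmin_def using x(1) by blast
qed

lemma hasmin_W: "hasmin (times_lo omega_lo (Suc n))"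
  unfolding hasmin_def
proof (intro bexI[of _ "pe 0 0"] ballI impI)
  show "pe 0 0 \<in> fst (times_lo omega_lo (Suc n))" by (auto simp: W_dom omega_lo_def)
  fix y assume "y \<in> fst (times_lo omega_lo (Suc n))" "y \<noteq> pe 0 0"
  then obtain i x where "y = pe i x" "(i, x) \<noteq> (0, 0)" by (auto simp: W_dom)
  then show "snd (times_lo omega_lo (Suc n)) (pe 0 0) y" by (auto simp: W_ord omega_lo_def)
qed

lemma nohasmin_W': "\<not> hasmin (times_lo (rev_lo omega_lo) (Suc n))"
  unfolding hasmin_def
proof
  assume "\<exists>x\<in>fst (times_lo (rev_lo omega_lo) (Suc n)). \<forall>y\<in>fst (times_lo (rev_lo omega_lo) (Suc n)). y \<noteq> x \<longrightarrow> snd (times_lo (rev_lo omega_lo) (Suc n)) x y"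
  then obtain x where x: "x \<in> fst (times_lo (rev_lo omega_lo) (Suc n))"
    "\<forall>y\<in>fst (times_lo (rev_lo omega_lo) (Suc n)). y \<noteq> x \<longrightarrow> snd (times_lo (rev_lo omega_lo) (Suc n)) x y" by blast
  let ?y = "pe 0 (Suc (snd (pd x)))"
  have "?y \<in> fst (times_lo (rev_lo omega_lo) (Suc n))" by (auto simp: W_dom rev_lo_def omega_lo_def)
  moreover have "?y \<noteq> x"
  proof
    assume "?y = x"
    then have "snd (pd ?y) = snd (pd x)" by simp
    then show False by simp
  qed
  ultimately have "snd (times_lo (rev_lo omega_lo) (Suc n)) x ?y" using x(2) by blast
  then show False by (simp add: W_ord rev_lo_def omega_lo_def)
qed

lemma hasmin_T: "0 < n \<Longrightarrow> hasmin (times_lo omega2_lo n)"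
  unfolding hasmin_def
proof (intro bexI[of _ "pe 0 (pe 0 0)"] ballI impI)
  assume "0 < n"
  then show "pe 0 (pe 0 0) \<in> fst (times_lo omega2_lo n)" by (auto simp: W_dom omega2_lo_def)
  fix y assume "y \<in> fst (times_lo omega2_lo n)" "y \<noteq> pe 0 (pe 0 0)"
  then obtain i z where y: "y = pe i z" "(i, z) \<noteq> (0, pe 0 0)" by (auto simp: W_dom)
  obtain j k where z: "pd z = (j, k)" by fastforce
  then have "z = pe j k" by (metis prod_decode_inverse)
  then show "snd (times_lo omega2_lo n) (pe 0 (pe 0 0)) y" using y z by (auto simp: W_ord omega2_lo_def)
qed

lemma nohasmin_T': "\<not> hasmin (times_lo (rev_lo omega2_lo) n)"
  unfolding hasmin_def
proof
  assume "\<exists>x\<in>fst (times_lo (rev_lo omega2_lo) n). \<forall>y\<in>fst (times_lo (rev_lo omega2_lo) n). y \<noteq> x \<longrightarrow> snd (times_lo (rev_lo omega2_lo) n) x y"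
  then obtain x where x: "x \<in> fst (times_lo (rev_lo omega2_lo) n)"
    "\<forall>y\<in>fst (times_lo (rev_lo omega2_lo) n). y \<noteq> x \<longrightarrow> snd (times_lo (rev_lo omega2_lo) n) x y" by blast
  obtain i z where xi: "x = pe i z" "i < n" using x(1) by (auto simp: W_dom)
  let ?y = "pe 0 (pe (Suc (fst (pd z))) 0)"
  have "?y \<in> fst (times_lo (rev_lo omega2_lo) n)" using xi by (auto simp: W_dom rev_lo_def omega2_lo_def)
  moreover have "?y \<noteq> x"
  proof
    assume "?y = x"
    then have "pe (Suc (fst (pd z))) 0 = z" using xi by simp
    then have "fst (pd z) = Suc (fst (pd z))" by (metis fst_conv prod_encode_inverse)
    then show False by simp
  qed
  ultimately have "snd (times_lo (rev_lo omega2_lo) n) x ?y" using x(2) by blast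
  then show False using xi by (auto simp: W_ord rev_lo_def omega2_lo_def split: prod.splits)
qed

lemma W_not_W': "\<not> iso (times_lo omega_lo (Suc n)) (times_lo (rev_lo omega_lo) (Suc n))"
  using hasmin_iso[OF iso_sym] hasmin_W nohasmin_W' by blast

lemma T_not_T': "0 < n \<Longrightarrow> \<not> iso (times_lo omega2_lo n) (times_lo (rev_lo omega2_lo) n)"
  using hasmin_iso[OF iso_sym] hasmin_T nohasmin_T' by blast

lemma iso_iff_helper:
  assumes "iso A X" "iso B Y" "iso A' U1" "iso B' V1" "iso X Y \<longleftrightarrow> iso U1 V1"
  shows "iso A B \<longleftrightarrow> iso A' B'"
proof -
  have "iso A B \<longleftrightarrow> iso X Y"
  proof
    assume "iso A B" then show "iso X Y" using iso_trans[OF iso_trans[OF iso_sym[OF assms(1)]] assms(2)] by blast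
  next
    assume "iso X Y" then show "iso A B" using iso_trans[OF iso_trans[OF assms(1)] iso_sym[OF assms(2)]] by blast
  qed
  moreover have "iso A' B' \<longleftrightarrow> iso U1 V1"
  proof
    assume "iso A' B'" then show "iso U1 V1" using iso_trans[OF iso_trans[OF iso_sym[OF assms(3)]] assms(4)] by blast
  next
    assume "iso U1 V1" then show "iso A' B'" using iso_trans[OF iso_trans[OF assms(3)] iso_sym[OF assms(4)]] by blast
  qed
  ultimately show ?thesis using assms(5) by simp
qed

theorem corollary3p3:
  fixes n :: nat
  assumes "n \<ge> 1"
  shows "cls2 (times_lo omega_lo (n + 1)) (times_lo (rev_lo omega_lo) (n + 1))
     \<le>\<^sub>c cls2 (times_lo omega2_lo n) (times_lo (rev_lo omega2_lo) n)"
proof -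
  have n: "0 < n" using assms by simp
  let ?W = "times_lo omega_lo (Suc n)" and ?W' = "times_lo (rev_lo omega_lo) (Suc n)"
  let ?T = "times_lo omega2_lo n" and ?T' = "times_lo (rev_lo omega2_lo) n"
  have K0: "A \<in> cls2 ?W ?W' \<longleftrightarrow> iso A ?W \<or> iso A ?W'" for A by (simp add: cls2_def)
  have K1: "A \<in> cls2 ?T ?T' \<longleftrightarrow> iso A ?T \<or> iso A ?T'" for A by (simp add: cls2_def)
  have out: "A \<in> cls2 ?W ?W' \<Longrightarrow> (iso A ?W \<and> iso (outS A) ?T) \<or> (iso A ?W' \<and> iso (outS A) ?T')" for A
    using K0 main_pos[OF n] main_neg[OF n] by blast
  have "comp_embedding Gam (cls2 ?W ?W') (cls2 ?T ?T')"
    unfolding comp_embedding_def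
  proof (intro conjI ballI allI impI)
    show "enum_op Gam" by (rule enum_op_Gam)
  next
    fix A assume A: "A \<in> cls2 ?W ?W'"
    have "outS A \<in> cls2 ?T ?T'" using out[OF A] K1 by blast
    then show "\<exists>B\<in>cls2 ?T ?T'. apply_op Gam (diag A) = diag B" using apply_Gam_diag by blast
  next
    fix A B A' B' assume A: "A \<in> cls2 ?W ?W'" and B: "B \<in> cls2 ?W ?W'"
      and a: "apply_op Gam (diag A) = diag A'" and b: "apply_op Gam (diag B) = diag B'"
    have ia: "iso A' (outS A)" using diag_iso[of A' "outS A"] a apply_Gam_diag[of A] by simp
    have ib: "iso B' (outS B)" using diag_iso[of B' "outS B"] b apply_Gam_diag[of B] by simp
    have WW: "iso ?W ?W' = False" "iso ?W' ?W = False" using W_not_W'[of n] iso_sym by blast+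
    have TT: "iso ?T ?T' = False" "iso ?T' ?T = False" using T_not_T'[OF n] iso_sym by blast+
    from out[OF A] show "iso A B \<longleftrightarrow> iso A' B'"
    proof
      assume a1: "iso A ?W \<and> iso (outS A) ?T"
      from out[OF B] show ?thesis
      proof
        assume b1: "iso B ?W \<and> iso (outS B) ?T"
        show ?thesis by (rule iso_iff_helper[of A ?W B ?W A' ?T B' ?T])
          (use a1 b1 ia ib iso_trans iso_refl in auto)
      next
        assume b1: "iso B ?W' \<and> iso (outS B) ?T'"
        show ?thesis by (rule iso_iff_helper[of A ?W B ?W' A' ?T B' ?T'])
          (use a1 b1 ia ib iso_trans WW TT in auto)
      qed
    next
      assume a1: "iso A ?W' \<and> iso (outS A) ?T'"
      from out[OF B] show ?thesis
      proof
        assume b1: "iso B ?W \<and> iso (outS B) ?T"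
        show ?thesis by (rule iso_iff_helper[of A ?W' B ?W A' ?T' B' ?T])
          (use a1 b1 ia ib iso_trans WW TT in auto)
      next
        assume b1: "iso B ?W' \<and> iso (outS B) ?T'"
        show ?thesis by (rule iso_iff_helper[of A ?W' B ?W' A' ?T' B' ?T'])
          (use a1 b1 ia ib iso_trans iso_refl in auto)
      qed
    qed
  qed
  then show ?thesis unfolding comp_reducible_def by auto
qed


end
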